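(* Let $U_{L}:=F_{\mathbf{i}}^{(\boldsymbol n)}\otimes I_{s}$ and $U_{R}:=F_{\mathbf{i}}^{(\boldsymbol n)}\otimes I_{t}$. Define, for $\ell=0,1,2,3$, \[ \Lambda_{\ell}:=\mathrm{blockdiag}\bigl(\widehat S_{\ell}(\boldsymbol k)\bigr)_{\boldsymbol k\in\Lambda_{\boldsymbol n}}, \qquad \widehat S_{\ell}(\boldsymbol k)=\sum_{\boldsymbol\rho\in \mathcal F}p_{\mathrm R}(\boldsymbol\rho)^{(\ell)}\,e^{-2\pi \mathbf{i}\sum_{\ell'=1}^{d} k_{\ell'}\rho_{\ell'}/n_{\ell'}}, \] where $\mathrm{blockdiag}$ denotes the block-diagonal matrix (ordered lexicographically in $\boldsymbol k$) with $s\times t$ diagonal blocks. Then \[ U_{L}\,C_{\boldsymbol n}\bigl(p_{\mathrm{R}}\bigr)\,U_{R}^{*} =\Lambda_{0}+\Lambda_{1}\,\mathbf{i}+\Lambda_{2}\,(A_{\boldsymbol n}\otimes I_{t})\,\mathbf{j} +\Lambda_{3}\,(A_{\boldsymbol n}\otimes I_{t})\,(\mathbf{i}\mathbf{j}). \] Moreover, with $\Pi_{L}:=P\otimes I_{s}$, $\Pi_{R}:=P\otimes I_{t}$, one has the block direct sum \[ \Pi_{L}U_{L}\,C_{\boldsymbol n}\bigl(p_{\mathrm{R}}\bigr)\,U_{R}^{*}\Pi_{R}^{*} =\bigoplus_{\boldsymbol k\in\mathrm{Fix}} \bigl( D_{1}(\boldsymbol k) +D_2(\boldsymbol k) \bigr)\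 \ \oplus\ \bigoplus_{\{\boldsymbol k,-\boldsymbol k\}}\begin{bmatrix} D_{1}(\boldsymbol k) & D_{2}(\boldsymbol k)\\[2pt] D_{2}(-\boldsymbol k) & D_{1}(-\boldsymbol k)\end{bmatrix}, \] where \[ D_{1}(\boldsymbol k):=\widehat S_{0}(\boldsymbol k)+\widehat S_{1}(\boldsymbol k)\,\mathbf{i},\qquad D_{2}(\boldsymbol k):=\bigl(\widehat S_{2}(\boldsymbol k)+\widehat S_{3}(\boldsymbol k)\,\mathbf{i}\bigr)\,\mathbf{j}. \]
   Context: Quaternions $\mathbb{H}$ with units $\mathbf{i},\mathbf{j}$, $\mathbf{k}=\mathbf{i}\mathbf{j}$, $\mathbf{i}^2=\mathbf{j}^2=-1$; $\mathbb{C}_{\mathbf{i}}=\mathrm{span}_{\mathbb{R}}\{1,\mathbf{i}\}$. Let $\boldsymbol n=(n_1,\dots,n_d)\in\mathbb{N}^d$, $\Lambda_{\boldsymbol n}=\prod_{\ell=1}^d\{0,\dots,n_\ell-1\}$ with lexicographic order, $N_{\boldsymbol n}=\prod_\ell n_\ell$. Multilevel periodic shifts $P_{\boldsymbol n}^{(\boldsymbol\rho)}:=P_{n_1}^{(\rho_1)}\otimes\cdots\otimes P_{n_d}^{(\rho_d)}$ with $[P_{n}^{(\rho)}]_{ij}=1$ if $i\equiv j+\rho \pmod n$, else $0$. Given a finite $\mathcal F\subset\mathbb{Z}^d$ and coefficients $p_{\mathrm R}(\boldsymbol\rho)\in\mathbb{H}^{s\times t}$ of the right trigonometric polynomial $p_{\mathrm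 R}(\boldsymbol\theta)=\sum_{\boldsymbol\rho\in\mathcal F}p_{\mathrm R}(\boldsymbol\rho)e^{-\mathbf{i}\langle\boldsymbol\rho,\boldsymbol\theta\rangle}$, the $d$-level $s\times t$ block circulant is $C_{\boldsymbol n}(p_{\mathrm R}):=\sum_{\boldsymbol\rho\in\mathcal F}P_{\boldsymbol n}^{(\boldsymbol\rho)}\otimes p_{\mathrm R}(\boldsymbol\rho)\in\mathbb{H}^{N_{\boldsymbol n}s\times N_{\boldsymbol n}t}$. Write each coefficient in Cartesian form $p_{\mathrm R}(\boldsymbol\rho)=p_{\mathrm R}(\boldsymbol\rho)^{(0)}+p_{\mathrm R}(\boldsymbol\rho)^{(1)}\mathbf{i}+p_{\mathrm R}(\boldsymbol\rho)^{(2)}\mathbf{j}+p_{\mathrm R}(\boldsymbol\rho)^{(3)}(\mathbf{i}\mathbf{j})$ with $p_{\mathrm R}(\boldsymbol\rho)^{(\ell)}\in\mathbb{R}^{s\times t}$. The QDFT is $[F_{\mathbf{i},n}]_{uv}=n^{-1/2}\exp(-2\pi\mathbf{i}uv/n)$, $u,v=0,\dots,n-1$, and $F_{\mathbf{i}}^{(\boldsymbol n)}:=F_{\mathbf{i},n_1}\otimes\cdots\otimes F_{\mathbf{i},n_d}$. $A_n\in\{0,1\}^{n\times n}$ is the permutation mapping $e_s\mapsto e_{(-s)\bmod n}$ and $A_{\boldsymbol n}:=A_{n_1}\otimes\cdots\otimes A_{n_d}$. For $\boldsymbol k\in\Lambda_{\boldsymbol n}$, $-\boldsymbol k:=((-k_1)\bmod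 n_1,\dots,(-k_d)\bmod n_d)$; $\mathrm{Fix}:=\{\boldsymbol k\in\Lambda_{\boldsymbol n}: 2k_\ell\equiv0 \pmod{n_\ell}\ \forall\ell\}$; $\mathcal K:=\{\boldsymbol k\in\Lambda_{\boldsymbol n}\setminus\mathrm{Fix}:\boldsymbol k\prec-\boldsymbol k\}$ (lexicographic order). $P$ is the permutation matrix mapping the canonical basis according to the ordered list: first the elements of $\mathrm{Fix}$ (lexicographically), then the pairs $\boldsymbol k_1,-\boldsymbol k_1,\boldsymbol k_2,-\boldsymbol k_2,\dots$ for $\boldsymbol k_j\in\mathcal K$ in lexicographic order. The second direct sum runs over unordered pairs $\{\boldsymbol k,-\boldsymbol k\}$ with $\boldsymbol k\in\mathcal K$. *)

theory Defs
  imports Complex_Main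
begin

datatype quat = Quat (q0: real) (q1: real) (q2: real) (q3: real)

lemma quat_eq_iff: "a = b \<longleftrightarrow> q0 a = q0 b \<and> q1 a = q1 b \<and> q2 a = q2 b \<and> q3 a = q3 b"
  by (cases a; cases b) auto

instantiation quat :: ring_1
begin
definition "0 = Quat 0 0 0 0"
definition "1 = Quat 1 0 0 0"
definition "a + b = Quat (q0 a + q0 b) (q1 a + q1 b) (q2 a + q2 b) (q3 a + q3 b)"
definition "a - b = Quat (q0 a - q0 b) (q1 a - q1 b) (q2 a - q2 b) (q3 a - q3 b)"
definition "- a = Quat (- q0 a) (- q1 a) (- q2 a) (- q3 a)"
text \<open>Hamilton product with i^2 = j^2 = -1, k = i j.\<close>
definition "a * b = Quat
   (q0 a * q0 b - q1 a * q1 b - q2 a * q2 b - q3 a * q3 b)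
   (q0 a * q1 b + q1 a * q0 b + q2 a * q3 b - q3 a * q2 b)
   (q0 a * q2 b - q1 a * q3 b + q2 a * q0 b + q3 a * q1 b)
   (q0 a * q3 b + q1 a * q2 b - q2 a * q1 b + q3 a * q0 b)"
instance
  by standard (auto simp: quat_eq_iff zero_quat_def one_quat_def plus_quat_def minus_quat_def
      uminus_quat_def times_quat_def algebra_simps)
end

definition qi :: quat where "qi = Quat 0 1 0 0"
definition qj :: quat where "qj = Quat 0 0 1 0"

definition qcnj :: "quat \<Rightarrow> quat" where "qcnj a = Quat (q0 a) (- q1 a) (- q2 a) (- q3 a)"

text \<open>Embedding of the complex numbers as C_i = span{1, i}.\<close>
definition of_cpx :: "complex \<Rightarrow> quat" where "of_cpx z = Quat (Re z) (Im z) 0 0"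

definition qcomp :: "nat \<Rightarrow> quat \<Rightarrow> real" where
  "qcomp l a = (if l = 0 then q0 a else if l = 1 then q1 a else if l = 2 then q2 a else q3 a)"

section \<open>Matrices as index functions with explicit dimensions\<close>

type_synonym qmat = "nat \<Rightarrow> nat \<Rightarrow> quat"

definition meq :: "nat \<Rightarrow> nat \<Rightarrow> qmat \<Rightarrow> qmat \<Rightarrow> bool" where
  "meq m n A B \<longleftrightarrow> (\<forall>i<m. \<forall>j<n. A i j = B i j)"

definition mmul :: "nat \<Rightarrow> qmat \<Rightarrow> qmat \<Rightarrow> qmat" where
  "mmul k A B = (\<lambda>i j. \<Sum>l<k. A i l * B l j)"

definition madd :: "qmat \<Rightarrow> qmat \<Rightarrow> qmat" where
  "madd A B = (\<lambda>i j. A i j + B i j)"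

definition mscal :: "qmat \<Rightarrow> quat \<Rightarrow> qmat" where
  "mscal A q = (\<lambda>i j. A i j * q)"

definition ctr :: "qmat \<Rightarrow> qmat" where
  "ctr A = (\<lambda>i j. qcnj (A j i))"

definition idm :: qmat where "idm = (\<lambda>i j. if i = j then 1 else 0)"

text \<open>Kronecker product of an (m1 x n1) matrix A with an (m2 x n2) matrix B
  (only the dimensions m2, n2 of the second factor are needed).\<close>
definition kron :: "qmat \<Rightarrow> nat \<Rightarrow> nat \<Rightarrow> qmat \<Rightarrow> qmat" where
  "kron A m2 n2 B = (\<lambda>i j. A (i div m2) (j div n2) * B (i mod m2) (j mod n2))"

text \<open>Iterated Kronecker product of square matrices given as (size, matrix) pairs:
  kronL [(n1,A1),...,(nd,Ad)] = A1 \<otimes> ... \<otimes> Ad.\<close>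
fun kronL :: "(nat \<times> qmat) list \<Rightarrow> qmat" where
  "kronL [] = (\<lambda>i j. 1)"
| "kronL ((n, A) # rest) = kron A (prod_list (map fst rest)) (prod_list (map fst rest)) (kronL rest)"

text \<open>Block direct sum of a list of (rows, cols, block) triples.\<close>
fun dsum :: "(nat \<times> nat \<times> qmat) list \<Rightarrow> qmat" where
  "dsum [] = (\<lambda>i j. 0)"
| "dsum ((r, c, M) # rest) = (\<lambda>i j. if i < r \<and> j < c then M i j
      else if r \<le> i \<and> c \<le> j then dsum rest (i - r) (j - c) else 0)"

text \<open>2x2 block matrix [A B; C D] with (s x t) blocks.\<close>
definition blk2 :: "nat \<Rightarrow> nat \<Rightarrow> qmat \<Rightarrow> qmat \<Rightarrow> qmat \<Rightarrow> qmat \<Rightarrow> qmat" where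
  "blk2 s t A B C D = (\<lambda>i j.
     if i < s then (if j < t then A i j else B i (j - t))
     else (if j < t then C (i - s) j else D (i - s) (j - t)))"

text \<open>All multi-indices of \<Lambda>_n, listed in lexicographic order.\<close>
fun lexlist :: "nat list \<Rightarrow> nat list list" where
  "lexlist [] = [[]]"
| "lexlist (n # ns) = concat (map (\<lambda>k. map (Cons k) (lexlist ns)) [0..<n])"

fun lex_less :: "nat list \<Rightarrow> nat list \<Rightarrow> bool" where
  "lex_less (a # as) (b # bs) = (a < b \<or> (a = b \<and> lex_less as bs))"
| "lex_less _ _ = False"

definition mneg :: "nat list \<Rightarrow> nat list \<Rightarrow> nat list" where
  "mneg ns k = map2 (\<lambda>n kl. nat ((- int kl) mod int n)) ns k"

definition isFix :: "nat list \<Rightarrow> nat list \<Rightarrow> bool" where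
  "isFix ns k \<longleftrightarrow> (\<forall>l<length ns. (2 * k ! l) mod (ns ! l) = 0)"

definition inK :: "nat list \<Rightarrow> nat list \<Rightarrow> bool" where
  "inK ns k \<longleftrightarrow> \<not> isFix ns k \<and> lex_less k (mneg ns k)"

text \<open>Ordered list: Fix (lexicographically), then k1, -k1, k2, -k2, ... for kj in K.\<close>
definition ordlist :: "nat list \<Rightarrow> nat list list" where
  "ordlist ns = filter (isFix ns) (lexlist ns)
      @ concat (map (\<lambda>k. [k, mneg ns k]) (filter (inK ns) (lexlist ns)))"

text \<open>Permutation matrix P: row r has its 1 in the column of the r-th element of ordlist,
  i.e. P maps e_{ordlist!r} to e_r.\<close>
definition Pperm :: "nat list \<Rightarrow> qmat" where
  "Pperm ns = (\<lambda>r c. if lexlist ns ! c = ordlist ns ! r then 1 else 0)"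

definition shiftm :: "nat \<Rightarrow> int \<Rightarrow> qmat" where
  "shiftm n \<rho> = (\<lambda>i j. if (int i - (int j + \<rho>)) mod int n = 0 then 1 else 0)"

definition mshift :: "nat list \<Rightarrow> int list \<Rightarrow> qmat" where
  "mshift ns \<rho> = kronL (map2 (\<lambda>n r. (n, shiftm n r)) ns \<rho>)"

definition circ :: "nat list \<Rightarrow> nat \<Rightarrow> nat \<Rightarrow> int list set \<Rightarrow> (int list \<Rightarrow> qmat) \<Rightarrow> qmat" where
  "circ ns s t F p = (\<lambda>i j. \<Sum>\<rho>\<in>F. kron (mshift ns \<rho>) s t (p \<rho>) i j)"

definition qdft1 :: "nat \<Rightarrow> qmat" where
  "qdft1 n = (\<lambda>u v. of_cpx (exp (- 2 * pi * \<i> * of_nat (u * v) / of_nat n) / of_real (sqrt (real n))))"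

definition qdft :: "nat list \<Rightarrow> qmat" where
  "qdft ns = kronL (map (\<lambda>n. (n, qdft1 n)) ns)"

definition flip1 :: "nat \<Rightarrow> qmat" where
  "flip1 n = (\<lambda>i j. if i = nat ((- int j) mod int n) then 1 else 0)"

definition flipm :: "nat list \<Rightarrow> qmat" where
  "flipm ns = kronL (map (\<lambda>n. (n, flip1 n)) ns)"

definition Shat :: "nat list \<Rightarrow> int list set \<Rightarrow> (int list \<Rightarrow> qmat) \<Rightarrow> nat \<Rightarrow> nat list \<Rightarrow> qmat" where
  "Shat ns F p l k = (\<lambda>a b. \<Sum>\<rho>\<in>F. of_cpx (of_real (qcomp l (p \<rho> a b)) *
      exp (- 2 * pi * \<i> * of_real (\<Sum>l'<length ns. real (k ! l') * real_of_int (\<rho> ! l') / real (ns ! l')))))"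

text \<open>Block diagonal matrix with (s x t) blocks B(k), k running over \<Lambda>_n lexicographically.\<close>
definition blockdiag :: "nat list \<Rightarrow> nat \<Rightarrow> nat \<Rightarrow> (nat list \<Rightarrow> qmat) \<Rightarrow> qmat" where
  "blockdiag ns s t B = (\<lambda>i j. if i div s = j div t
      then B (lexlist ns ! (i div s)) (i mod s) (j mod t) else 0)"

definition D1 :: "nat list \<Rightarrow> int list set \<Rightarrow> (int list \<Rightarrow> qmat) \<Rightarrow> nat list \<Rightarrow> qmat" where
  "D1 ns F p k = madd (Shat ns F p 0 k) (mscal (Shat ns F p 1 k) qi)"

definition D2 :: "nat list \<Rightarrow> int list set \<Rightarrow> (int list \<Rightarrow> qmat) \<Rightarrow> nat list \<Rightarrow> qmat" where
  "D2 ns F p k = mscal (madd (Shat ns F p 2 k) (mscal (Shat ns F p 3 k) qi)) qj"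

end

theory Submission
  imports Defs
begin


lemma of_cpx_mult: "of_cpx (a * b) = of_cpx a * of_cpx b"
  by (simp add: of_cpx_def times_quat_def)
lemma of_cpx_add: "of_cpx (a + b) = of_cpx a + of_cpx b"
  by (simp add: of_cpx_def plus_quat_def)
lemma of_cpx_0[simp]: "of_cpx 0 = 0"
  by (simp add: of_cpx_def zero_quat_def)
lemma of_cpx_1[simp]: "of_cpx 1 = 1"
  by (simp add: of_cpx_def one_quat_def)
lemma of_cpx_sum: "of_cpx (sum f A) = (\<Sum>x\<in>A. of_cpx (f x))"
  by (induction A rule: infinite_finite_induct) (simp_all add: of_cpx_add)
lemma qcnj_of_cpx: "qcnj (of_cpx z) = of_cpx (cnj z)"
  by (simp add: qcnj_def of_cpx_def)
lemma of_cpx_qi: "of_cpx a * qi = of_cpx (a * \<i>)"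
  by (simp add: of_cpx_def qi_def times_quat_def)
lemma of_cpx_qj_add: "of_cpx a * qj + of_cpx b * qj = of_cpx (a + b) * qj"
  by (simp add: distrib_right of_cpx_add)

definition cpart :: "quat \<Rightarrow> complex" where "cpart P = Complex (q0 P) (q1 P)"
definition jpart :: "quat \<Rightarrow> complex" where "jpart P = Complex (q2 P) (q3 P)"

lemma term_split: "of_cpx a * P * of_cpx b = of_cpx (a * cpart P * b) + of_cpx (a * jpart P * cnj b) * qj"
  by (simp add: quat_eq_iff of_cpx_def cpart_def jpart_def times_quat_def plus_quat_def qj_def algebra_simps)

lemma qcnj_real01: "qcnj (if P then 1 else 0) = (if P then 1 else 0)"
  by (simp add: qcnj_def one_quat_def zero_quat_def)

lemma sum_split_mult: 
  fixes f :: "nat \<Rightarrow> 'a::comm_monoid_add"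
  shows "(\<Sum>x<M*m. f x) = (\<Sum>y<M. \<Sum>z<m. f (y*m+z))"
proof (induction M)
  case 0 then show ?case by simp
next
  case (Suc M)
  have e: "{..<Suc M*m} = {..<M*m} \<union> {M*m..<M*m+m}" by auto
  have "(\<Sum>x<Suc M*m. f x) = (\<Sum>x<M*m. f x) + (\<Sum>x\<in>{M*m..<M*m+m}. f x)"
    unfolding e by (rule sum.union_disjoint) auto
  also have "(\<Sum>x\<in>{M*m..<M*m+m}. f x) = (\<Sum>z<m. f (M*m+z))"
    using sum.shift_bounds_nat_ivl[of f 0 "M*m" m] by (simp add: add.commute lessThan_atLeast0)
  finally show ?case using Suc by simp
qed


definition w :: "nat \<Rightarrow> int \<Rightarrow> complex" where
  "w n m = cis (- 2 * pi * of_int m / of_nat n)"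

lemma w_exp: "w n m = exp (- 2 * of_real pi * \<i> * of_int m / of_nat n)"
  unfolding w_def cis_conv_exp by (simp add: mult_ac)

lemma w_add: "w n (a + b) = w n a * w n b"
  by (simp add: w_def cis_mult ring_distribs add_divide_distrib diff_divide_distrib)

lemma w_period: assumes "0 < n" shows "w n (a + int n * z) = w n a"
proof -
  have arg: "- 2 * pi * real_of_int (a + int n * z) / real n = - 2 * pi * real_of_int a / real n + 2 * pi * real_of_int (- z)"
    using assms by (simp add: field_simps)
  have "w n (a + int n * z) = w n a * cis (2 * pi * real_of_int (- z))"
    unfolding w_def arg cis_mult by simp
  moreover have "cis (2 * pi * real_of_int (- z)) = 1" by (rule cis_multiple_2pi) simp
  ultimately show ?thesis by simp
qed

lemma w_cong: assumes "0 < n" "a mod int n = b mod int n" shows "w n a = w n b"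
proof -
  have "int n dvd a - b" using assms(2) by (simp add: mod_eq_dvd_iff)
  then obtain k where "a = b + int n * k" by (auto simp: dvd_def algebra_simps)
  then show ?thesis using w_period[OF assms(1)] by simp
qed

lemma w_eq_1: assumes "0 < n" shows "w n m = 1 \<longleftrightarrow> int n dvd m"
proof
  assume "w n m = 1"
  then have "cos (- 2 * pi * of_int m / of_nat n) = 1"
    unfolding w_def by (metis Re_complex_of_real cis.simps(1) of_real_1)
  then obtain k :: int where k: "- 2 * pi * of_int m / of_nat n = of_int k * 2 * pi"
    using cos_one_2pi_int by blast
  then have "pi * (- real_of_int m) = pi * (of_int k * of_nat n)"
    using assms by (simp add: field_simps)
  then have "real_of_int m = - of_int k * of_nat n"
    using pi_gt_zero by (simp only: mult_left_cancel[of pi])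
  then have "m = - k * int n"
    by (metis of_int_eq_iff of_int_minus of_int_mult of_int_of_nat_eq)
  then show "int n dvd m" by simp
next
  assume "int n dvd m"
  then obtain k where "m = int n * k" by (auto simp: dvd_def)
  then show "w n m = 1" using w_period[OF assms, of 0 k] by (simp add: w_def)
qed

lemma w_pow: "w n (d * int y) = w n d ^ y"
  by (simp add: w_def DeMoivre mult_ac)

lemma cnj_w: "cnj (w n m) = w n (- m)"
  by (simp add: w_def cis_cnj)

lemma w_n: assumes "0 < n" shows "w n (int n) = 1"
  using w_eq_1[OF assms] by simp

lemma geom: assumes "0 < n"
  shows "(\<Sum>y<n. w n (d * int y)) = (if int n dvd d then of_nat n else 0)"
proof (cases "int n dvd d")
  case True
  then have "w n d = 1" using w_eq_1[OF assms] by simp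
  then show ?thesis using True by (simp add: w_pow)
next
  case False
  then have ne: "w n d \<noteq> 1" using w_eq_1[OF assms] by simp
  have "w n d ^ n = 1"
    by (metis w_pow assms w_eq_1 dvd_triv_right)
  then show ?thesis using False ne by (simp add: w_pow geometric_sum)
qed


type_synonym cmat = "nat \<Rightarrow> nat \<Rightarrow> complex"
definition cmul :: "nat \<Rightarrow> cmat \<Rightarrow> cmat \<Rightarrow> cmat" where
  "cmul N A B = (\<lambda>i j. \<Sum>l<N. A i l * B l j)"
definition cctr :: "cmat \<Rightarrow> cmat" where "cctr A = (\<lambda>i j. cnj (A j i))"
definition ctrans :: "cmat \<Rightarrow> cmat" where "ctrans A = (\<lambda>i j. A j i)"
definition ckron :: "cmat \<Rightarrow> nat \<Rightarrow> cmat \<Rightarrow> cmat" where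
  "ckron A m B = (\<lambda>i j. A (i div m) (j div m) * B (i mod m) (j mod m))"
fun ckronL :: "(nat \<times> cmat) list \<Rightarrow> cmat" where
  "ckronL [] = (\<lambda>i j. 1)"
| "ckronL ((n, A) # rest) = ckron A (prod_list (map fst rest)) (ckronL rest)"

lemma ckron_mixed: assumes "0 < m"
  shows "cmul (M*m) (ckron A m B) (ckron C m D) = ckron (cmul M A C) m (cmul m B D)"
proof (intro ext)
  fix i j
  have "cmul (M*m) (ckron A m B) (ckron C m D) i j
     = (\<Sum>y<M. \<Sum>z<m. A (i div m) y * B (i mod m) z * (C y (j div m) * D z (j mod m)))"
    using assms by (simp add: cmul_def ckron_def sum_split_mult mult_ac)
  also have "\<dots> = ckron (cmul M A C) m (cmul m B D) i j"
    by (simp add: ckron_def cmul_def sum_product mult_ac)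
  finally show "cmul (M*m) (ckron A m B) (ckron C m D) i j = ckron (cmul M A C) m (cmul m B D) i j" .
qed

lemma cctr_ckron: "cctr (ckron A m B) = ckron (cctr A) m (cctr B)"
  by (simp add: cctr_def ckron_def fun_eq_iff)
lemma ctrans_ckron: "ctrans (ckron A m B) = ckron (ctrans A) m (ctrans B)"
  by (simp add: ctrans_def ckron_def fun_eq_iff)

definition cq1 :: "nat \<Rightarrow> cmat" where
  "cq1 n = (\<lambda>u v. exp (- 2 * pi * \<i> * of_nat (u * v) / of_nat n) / of_real (sqrt (real n)))"
definition cs1 :: "nat \<Rightarrow> int \<Rightarrow> cmat" where
  "cs1 n r = (\<lambda>i j. if (int i - (int j + r)) mod int n = 0 then 1 else 0)"
definition cf1 :: "nat \<Rightarrow> cmat" where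
  "cf1 n = (\<lambda>i j. if i = nat ((- int j) mod int n) then 1 else 0)"

lemma cq1_w: "cq1 n u v = w n (int u * int v) / of_real (sqrt (real n))"
  by (simp add: cq1_def w_exp)

lemma QS1: assumes "0 < n"
  shows "(\<Sum>x<n. cq1 n u x * cs1 n r x y) = w n (int u * (int y + r)) / of_real (sqrt (real n))"
proof -
  define x0 where "x0 = nat ((int y + r) mod int n)"
  have x0n: "x0 < n" using assms by (simp add: x0_def nat_less_iff)
  have ix0: "int x0 = (int y + r) mod int n" using assms by (simp add: x0_def)
  have c: "(int x - (int y + r)) mod int n = 0 \<longleftrightarrow> x = x0" if "x < n" for x
  proof -
    have "(int x - (int y + r)) mod int n = 0 \<longleftrightarrow> int x mod int n = (int y + r) mod int n"
      by (simp add: mod_eq_dvd_iff mod_eq_0_iff_dvd)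
    also have "\<dots> \<longleftrightarrow> int x = int x0" using that by (simp add: ix0)
    finally show ?thesis by simp
  qed
  have "(\<Sum>x<n. cq1 n u x * cs1 n r x y) = (\<Sum>x<n. if x = x0 then cq1 n u x else 0)"
    by (rule sum.cong) (simp_all add: cs1_def c)
  also have "\<dots> = cq1 n u x0" using x0n by simp
  also have "\<dots> = w n (int u * (int y + r)) / of_real (sqrt (real n))"
  proof -
    have "w n (int u * int x0) = w n (int u * (int y + r))"
      by (rule w_cong[OF assms]) (simp add: ix0 mod_mult_right_eq)
    then show ?thesis unfolding cq1_w by simp
  qed
  finally show ?thesis .
qed

lemma sqrt_sq_c: "of_real (sqrt (real n)) * of_real (sqrt (real n)) = (of_nat n :: complex)"
  by (metis of_real_mult of_real_of_nat_eq real_sqrt_mult_self of_nat_0_le_iff real_sqrt_abs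
      abs_of_nonneg)

lemma dvd_diff_lt: assumes "u < n" "v < n" shows "int n dvd (int u - int v) \<longleftrightarrow> u = v"
proof
  assume d: "int n dvd (int u - int v)"
  have "\<bar>int u - int v\<bar> < int n" using assms by linarith
  show "u = v"
  proof (rule ccontr)
    assume "u \<noteq> v" then have "int u - int v \<noteq> 0" by simp
    from dvd_imp_le_int[OF this d] have "int n \<le> \<bar>int u - int v\<bar>" by simp
    with \<open>\<bar>int u - int v\<bar> < int n\<close> show False by simp
  qed
qed simp

lemma QSQ1: assumes "0 < n" "u < n" "v < n"
  shows "cmul n (cmul n (cq1 n) (cs1 n r)) (cctr (cq1 n)) u v = (if u = v then w n (int u * r) else 0)"
proof -
  have inner: "cmul n (cq1 n) (cs1 n r) u y = w n (int u * (int y + r)) / of_real (sqrt (real n))" for y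
    by (simp add: cmul_def QS1[OF assms(1)])
  have "cmul n (cmul n (cq1 n) (cs1 n r)) (cctr (cq1 n)) u v
      = (\<Sum>y<n. w n (int u * (int y + r)) / of_real (sqrt (real n)) * cnj (w n (int v * int y) / of_real (sqrt (real n))))"
    unfolding cmul_def[of n "cmul n (cq1 n) (cs1 n r)"] by (simp add: inner cctr_def cq1_w)
  also have "\<dots> = (\<Sum>y<n. w n (int u * r) * w n ((int u - int v) * int y) / of_nat n)"
  proof (rule sum.cong[OF refl])
    fix y
    have "w n (int u * (int y + r)) * w n (- (int v * int y)) = w n (int u * r) * w n ((int u - int v) * int y)"
      unfolding w_add[symmetric] by (simp add: algebra_simps)
    then show "w n (int u * (int y + r)) / of_real (sqrt (real n)) * cnj (w n (int v * int y) / of_real (sqrt (real n)))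
      = w n (int u * r) * w n ((int u - int v) * int y) / of_nat n"
      by (simp add: cnj_w sqrt_sq_c[symmetric])
  qed
  also have "\<dots> = w n (int u * r) * (\<Sum>y<n. w n ((int u - int v) * int y)) / of_nat n"
    by (simp only: sum_divide_distrib[symmetric] sum_distrib_left)
  also have "\<dots> = w n (int u * r) * (if int n dvd (int u - int v) then of_nat n else 0) / of_nat n"
    by (simp only: geom[OF assms(1)])
  also have "\<dots> = (if u = v then w n (int u * r) else 0)"
    using assms(1) unfolding dvd_diff_lt[OF assms(2,3)] by simp
  finally show ?thesis .
qed


lemma dvd_add_flip: assumes "u < n" "v < n"
  shows "int n dvd (int u + int v) \<longleftrightarrow> u = nat ((- int v) mod int n)"
proof -
  have n0: "0 < n" using assms by simp
  have "u = nat ((- int v) mod int n) \<longleftrightarrow> int u = (- int v) mod int n"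
    using n0 by auto
  also have "\<dots> \<longleftrightarrow> int u mod int n = (- int v) mod int n"
    using assms by simp
  also have "\<dots> \<longleftrightarrow> int n dvd (int u - (- int v))"
    by (simp add: mod_eq_dvd_iff)
  finally show ?thesis by simp
qed

lemma QSQT1: assumes "0 < n" "u < n" "v < n"
  shows "cmul n (cmul n (cq1 n) (cs1 n r)) (ctrans (cq1 n)) u v = w n (int u * r) * cf1 n u v"
proof -
  have inner: "cmul n (cq1 n) (cs1 n r) u y = w n (int u * (int y + r)) / of_real (sqrt (real n))" for y
    by (simp add: cmul_def QS1[OF assms(1)])
  have "cmul n (cmul n (cq1 n) (cs1 n r)) (ctrans (cq1 n)) u v
      = (\<Sum>y<n. w n (int u * (int y + r)) / of_real (sqrt (real n)) * (w n (int v * int y) / of_real (sqrt (real n))))"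
    unfolding cmul_def[of n "cmul n (cq1 n) (cs1 n r)"] by (simp add: inner ctrans_def cq1_w)
  also have "\<dots> = (\<Sum>y<n. w n (int u * r) * w n ((int u + int v) * int y) / of_nat n)"
  proof (rule sum.cong[OF refl])
    fix y
    have "w n (int u * (int y + r)) * w n (int v * int y) = w n (int u * r) * w n ((int u + int v) * int y)"
      unfolding w_add[symmetric] by (simp add: algebra_simps)
    then show "w n (int u * (int y + r)) / of_real (sqrt (real n)) * (w n (int v * int y) / of_real (sqrt (real n)))
      = w n (int u * r) * w n ((int u + int v) * int y) / of_nat n"
      by (simp add: sqrt_sq_c[symmetric])
  qed
  also have "\<dots> = w n (int u * r) * (\<Sum>y<n. w n ((int u + int v) * int y)) / of_nat n"
    by (simp only: sum_divide_distrib[symmetric] sum_distrib_left)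
  also have "\<dots> = w n (int u * r) * (if int n dvd (int u + int v) then of_nat n else 0) / of_nat n"
    by (simp only: geom[OF assms(1)])
  also have "\<dots> = w n (int u * r) * cf1 n u v"
    using assms(1) unfolding dvd_add_flip[OF assms(2,3)] cf1_def by simp
  finally show ?thesis .
qed

definition cQ :: "nat list \<Rightarrow> cmat" where "cQ ns = ckronL (map (\<lambda>n. (n, cq1 n)) ns)"
definition cS :: "nat list \<Rightarrow> int list \<Rightarrow> cmat" where
  "cS ns \<rho> = ckronL (map (\<lambda>(n, r). (n, cs1 n r)) (zip ns \<rho>))"
definition cF :: "nat list \<Rightarrow> cmat" where "cF ns = ckronL (map (\<lambda>n. (n, cf1 n)) ns)"
definition cE :: "nat list \<Rightarrow> nat list \<Rightarrow> int list \<Rightarrow> complex" where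
  "cE ns k \<rho> = exp (- 2 * pi * \<i> * of_real (\<Sum>l'<length ns. real (k ! l') * real_of_int (\<rho> ! l') / real (ns ! l')))"

lemma cQ_cons: "cQ (n # ns) = ckron (cq1 n) (prod_list ns) (cQ ns)"
  by (simp add: cQ_def o_def)
lemma cF_cons: "cF (n # ns) = ckron (cf1 n) (prod_list ns) (cF ns)"
  by (simp add: cF_def o_def)
lemma cS_cons: "length \<rho> = length ns \<Longrightarrow> cS (n # ns) (r # \<rho>) = ckron (cs1 n r) (prod_list ns) (cS ns \<rho>)"
  by (simp add: cS_def o_def case_prod_unfold)

lemma cE_cons: "cE (n # ns) (a # k) (r # \<rho>) = w n (int a * r) * cE ns k \<rho>"
proof -
  have "(\<Sum>l'<length (n # ns). real ((a # k) ! l') * real_of_int ((r # \<rho>) ! l') / real ((n # ns) ! l'))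
     = real a * real_of_int r / real n + (\<Sum>l'<length ns. real (k ! l') * real_of_int (\<rho> ! l') / real (ns ! l'))"
    by (simp only: length_Cons sum.lessThan_Suc_shift) simp
  then show ?thesis
    by (simp add: cE_def w_exp exp_add[symmetric] ring_distribs add_divide_distrib diff_divide_distrib)
qed

lemma cE_nil: "cE [] k \<rho> = 1"
  by (simp add: cE_def)

lemma nth_concat_uniform:
  assumes "\<forall>x\<in>set xs. length (f x) = m" "u < length xs * m"
  shows "concat (map f xs) ! u = f (xs ! (u div m)) ! (u mod m)"
  using assms
proof (induction xs arbitrary: u)
  case Nil then show ?case by simp
next
  case (Cons x xs)
  show ?case
  proof (cases "u < m")
    case True then show ?thesis using Cons.prems by (simp add: nth_append)
  next
    case False
    then have m0: "0 < m" using Cons.prems by (cases m) auto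
    have "u - m < length xs * m" using Cons.prems False by auto
    moreover have "u div m = Suc ((u - m) div m)" "u mod m = (u - m) mod m"
      using False m0 by (simp_all add: le_div_geq le_mod_geq)
    ultimately show ?thesis using Cons False by (simp add: nth_append)
  qed
qed

lemma length_lexlist[simp]: "length (lexlist ns) = prod_list ns"
  by (induction ns) (simp_all add: length_concat o_def sum_list_triv)

lemma lexlist_nth_cons: assumes "u < n * prod_list ns"
  shows "lexlist (n # ns) ! u = (u div prod_list ns) # (lexlist ns ! (u mod prod_list ns))"
proof -
  have pos: "0 < prod_list ns" using assms by (cases "prod_list ns = 0") auto
  have "lexlist (n # ns) ! u = map (Cons ([0..<n] ! (u div prod_list ns))) (lexlist ns) ! (u mod prod_list ns)"
    unfolding lexlist.simps by (rule nth_concat_uniform) (use assms in auto)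
  also have "\<dots> = (u div prod_list ns) # (lexlist ns ! (u mod prod_list ns))"
    using assms pos by (simp add: less_mult_imp_div_less mult.commute)
  finally show ?thesis .
qed


declare lexlist.simps(2)[simp del]

lemma eq_div_mod: "(u::nat) = v \<longleftrightarrow> u div N = v div N \<and> u mod N = v mod N"
  by (metis div_mult_mod_eq)

lemma pos_tl: "\<forall>l<length ((n::nat) # ns). 0 < (n # ns) ! l \<Longrightarrow> \<forall>l<length ns. 0 < ns ! l"
proof (intro allI impI)
  fix l assume a: "\<forall>l<length (n # ns). 0 < (n # ns) ! l" and "l < length ns"
  then show "0 < ns ! l" using a[rule_format, of "Suc l"] by simp
qed

lemma pos_hd: "\<forall>l<length ((n::nat) # ns). 0 < (n # ns) ! l \<Longrightarrow> 0 < n"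
  by (drule spec[of _ 0]) simp

lemma prod_pos: "\<forall>l<length (ns::nat list). 0 < ns ! l \<Longrightarrow> 0 < prod_list ns"
proof (induction ns)
  case (Cons n ns)
  have "0 < n" using pos_hd[OF Cons.prems] .
  moreover have "\<forall>l<length ns. 0 < ns ! l" using pos_tl[OF Cons.prems] .
  ultimately show ?case using Cons.IH by simp
qed simp

lemma QSQ:
  assumes "\<forall>l<length ns. 0 < ns ! l" "length \<rho> = length ns" "u < prod_list ns" "v < prod_list ns"
  shows "cmul (prod_list ns) (cmul (prod_list ns) (cQ ns) (cS ns \<rho>)) (cctr (cQ ns)) u v
         = (if u = v then cE ns (lexlist ns ! u) \<rho> else 0)"
  using assms
proof (induction ns arbitrary: \<rho> u v)
  case Nil
  then show ?case by (simp add: cmul_def cQ_def cS_def cctr_def cE_nil)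
next
  case (Cons n ns)
  obtain r \<rho>' where rho: "\<rho> = r # \<rho>'" "length \<rho>' = length ns"
    using Cons.prems(2) by (cases \<rho>) auto
  have n0: "0 < n" using pos_hd[OF Cons.prems(1)] .
  have pos': "\<forall>l<length ns. 0 < ns ! l" using pos_tl[OF Cons.prems(1)] .
  define N where "N = prod_list ns"
  have N0: "0 < N" using prod_pos[OF pos'] by (simp add: N_def)
  have un: "u div N < n" "v div N < n" using Cons.prems(3,4)
    by (simp_all add: N_def less_mult_imp_div_less)
  have um: "u mod N < N" "v mod N < N" using N0 by simp_all
  have "cmul (prod_list (n # ns)) (cmul (prod_list (n # ns)) (cQ (n # ns)) (cS (n # ns) \<rho>)) (cctr (cQ (n # ns))) u v
     = ckron (cmul n (cmul n (cq1 n) (cs1 n r)) (cctr (cq1 n))) N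
             (cmul N (cmul N (cQ ns) (cS ns \<rho>')) (cctr (cQ ns))) u v"
  proof -
    have pl: "prod_list (n#ns) = n * N" by (simp add: N_def)
    have q: "cQ (n#ns) = ckron (cq1 n) N (cQ ns)" by (simp add: cQ_cons N_def)
    have sr: "cS (n#ns) \<rho> = ckron (cs1 n r) N (cS ns \<rho>')" by (simp add: rho cS_cons N_def)
    show ?thesis unfolding pl q sr cctr_ckron ckron_mixed[OF N0] by (rule refl)
  qed
  also have "\<dots> = (if u div N = v div N then w n (int (u div N) * r) else 0) *
                  (if u mod N = v mod N then cE ns (lexlist ns ! (u mod N)) \<rho>' else 0)"
    unfolding ckron_def using Cons.IH[OF pos' rho(2) um[unfolded N_def]] QSQ1[OF n0 un]
    by (simp add: N_def)
  also have "\<dots> = (if u = v then cE (n # ns) (lexlist (n # ns) ! u) \<rho> else 0)"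
  proof -
    have "u = v \<longleftrightarrow> u div N = v div N \<and> u mod N = v mod N"
      by (rule eq_div_mod)
    moreover have "lexlist (n # ns) ! u = (u div N) # (lexlist ns ! (u mod N))"
    proof -
      have "u < n * prod_list ns" using Cons.prems(3) by simp
      from lexlist_nth_cons[OF this] show ?thesis unfolding N_def .
    qed
    ultimately show ?thesis by (simp add: rho cE_cons)
  qed
  finally show ?case .
qed

lemma QSQT:
  assumes "\<forall>l<length ns. 0 < ns ! l" "length \<rho> = length ns" "u < prod_list ns" "v < prod_list ns"
  shows "cmul (prod_list ns) (cmul (prod_list ns) (cQ ns) (cS ns \<rho>)) (ctrans (cQ ns)) u v
         = cE ns (lexlist ns ! u) \<rho> * cF ns u v"
  using assms
proof (induction ns arbitrary: \<rho> u v)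
  case Nil
  then show ?case by (simp add: cmul_def cQ_def cS_def cF_def ctrans_def cE_nil)
next
  case (Cons n ns)
  obtain r \<rho>' where rho: "\<rho> = r # \<rho>'" "length \<rho>' = length ns"
    using Cons.prems(2) by (cases \<rho>) auto
  have n0: "0 < n" using pos_hd[OF Cons.prems(1)] .
  have pos': "\<forall>l<length ns. 0 < ns ! l" using pos_tl[OF Cons.prems(1)] .
  define N where "N = prod_list ns"
  have N0: "0 < N" using prod_pos[OF pos'] by (simp add: N_def)
  have un: "u div N < n" "v div N < n" using Cons.prems(3,4)
    by (simp_all add: N_def less_mult_imp_div_less)
  have um: "u mod N < N" "v mod N < N" using N0 by simp_all
  have "cmul (prod_list (n # ns)) (cmul (prod_list (n # ns)) (cQ (n # ns)) (cS (n # ns) \<rho>)) (ctrans (cQ (n # ns))) u v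
     = ckron (cmul n (cmul n (cq1 n) (cs1 n r)) (ctrans (cq1 n))) N
             (cmul N (cmul N (cQ ns) (cS ns \<rho>')) (ctrans (cQ ns))) u v"
  proof -
    have pl: "prod_list (n#ns) = n * N" by (simp add: N_def)
    have q: "cQ (n#ns) = ckron (cq1 n) N (cQ ns)" by (simp add: cQ_cons N_def)
    have sr: "cS (n#ns) \<rho> = ckron (cs1 n r) N (cS ns \<rho>')" by (simp add: rho cS_cons N_def)
    show ?thesis unfolding pl q sr ctrans_ckron ckron_mixed[OF N0] by (rule refl)
  qed
  also have "\<dots> = (w n (int (u div N) * r) * cf1 n (u div N) (v div N)) *
                  (cE ns (lexlist ns ! (u mod N)) \<rho>' * cF ns (u mod N) (v mod N))"
    unfolding ckron_def using Cons.IH[OF pos' rho(2) um[unfolded N_def]] QSQT1[OF n0 un]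
    by (simp add: N_def)
  also have "\<dots> = cE (n # ns) (lexlist (n # ns) ! u) \<rho> * cF (n # ns) u v"
  proof -
    have "lexlist (n # ns) ! u = (u div N) # (lexlist ns ! (u mod N))"
    proof -
      have "u < n * prod_list ns" using Cons.prems(3) by simp
      from lexlist_nth_cons[OF this] show ?thesis unfolding N_def .
    qed
    then show ?thesis by (simp add: rho cE_cons cF_cons ckron_def N_def[symmetric])
  qed
  finally show ?case .
qed


lemma kronL_cpx: "kronL (map (\<lambda>x. (f x, \<lambda>i j. of_cpx (g x i j))) xs) = (\<lambda>i j. of_cpx (ckronL (map (\<lambda>x. (f x, g x)) xs) i j))"
proof (induction xs)
  case Nil then show ?case by simp
next
  case (Cons x xs)
  have e: "prod_list (map fst (map (\<lambda>x. (f x, \<lambda>i j. of_cpx (g x i j))) xs)) = prod_list (map fst (map (\<lambda>x. (f x, g x)) xs))"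
    by (simp add: o_def)
  show ?case unfolding list.map kronL.simps ckronL.simps e Cons.IH
    by (simp add: kron_def ckron_def of_cpx_mult)
qed

lemma of_cpx_ite: "of_cpx (if P then 1 else 0) = (if P then 1 else 0)"
  by simp

lemma qdft_cpx: "qdft ns = (\<lambda>i j. of_cpx (cQ ns i j))"
proof -
  have "qdft ns = kronL (map (\<lambda>n. (n, \<lambda>i j. of_cpx (cq1 n i j))) ns)"
    by (simp add: qdft_def qdft1_def cq1_def)
  also have "\<dots> = (\<lambda>i j. of_cpx (cQ ns i j))"
    using kronL_cpx[of id cq1 ns] by (simp add: cQ_def)
  finally show ?thesis .
qed

lemma flipm_cpx: "flipm ns = (\<lambda>i j. of_cpx (cF ns i j))"
proof -
  have "flipm ns = kronL (map (\<lambda>n. (n, \<lambda>i j. of_cpx (cf1 n i j))) ns)"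
    unfolding flipm_def flip1_def cf1_def of_cpx_ite by (rule refl)
  also have "\<dots> = (\<lambda>i j. of_cpx (cF ns i j))"
    using kronL_cpx[of id cf1 ns] by (simp add: cF_def)
  finally show ?thesis .
qed

lemma mshift_cpx: "mshift ns \<rho> = (\<lambda>i j. of_cpx (cS ns \<rho> i j))"
proof -
  have "mshift ns \<rho> = kronL (map (\<lambda>x. (fst x, \<lambda>i j. of_cpx (cs1 (fst x) (snd x) i j))) (zip ns \<rho>))"
    unfolding mshift_def shiftm_def cs1_def case_prod_unfold of_cpx_ite by (rule refl)
  also have "\<dots> = (\<lambda>i j. of_cpx (cS ns \<rho> i j))"
    using kronL_cpx[of fst "\<lambda>x. cs1 (fst x) (snd x)" "zip ns \<rho>"] by (simp add: cS_def case_prod_unfold)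
  finally show ?thesis .
qed

lemma mneg_cons: "mneg (n # ns) (a # k) = nat ((- int a) mod int n) # mneg ns k"
  by (simp add: mneg_def)

lemma cF_lex:
  assumes "\<forall>l<length ns. 0 < ns ! l" "u < prod_list ns" "v < prod_list ns"
  shows "cF ns u v = (if lexlist ns ! v = mneg ns (lexlist ns ! u) then 1 else 0)"
  using assms
proof (induction ns arbitrary: u v)
  case Nil then show ?case by (simp add: cF_def mneg_def)
next
  case (Cons n ns)
  have n0: "0 < n" using pos_hd[OF Cons.prems(1)] .
  have pos': "\<forall>l<length ns. 0 < ns ! l" using pos_tl[OF Cons.prems(1)] .
  define N where "N = prod_list ns"
  have N0: "0 < N" using prod_pos[OF pos'] by (simp add: N_def)
  have un: "u div N < n" "v div N < n" using Cons.prems(2,3)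
    by (simp_all add: N_def less_mult_imp_div_less)
  have um: "u mod N < N" "v mod N < N" using N0 by simp_all
  have lu: "lexlist (n # ns) ! u = (u div N) # (lexlist ns ! (u mod N))"
  proof -
    have "u < n * prod_list ns" using Cons.prems(2) by simp
    from lexlist_nth_cons[OF this] show ?thesis unfolding N_def .
  qed
  have lv: "lexlist (n # ns) ! v = (v div N) # (lexlist ns ! (v mod N))"
  proof -
    have "v < n * prod_list ns" using Cons.prems(3) by simp
    from lexlist_nth_cons[OF this] show ?thesis unfolding N_def .
  qed
  have c1: "cf1 n (u div N) (v div N) = (if v div N = nat ((- int (u div N)) mod int n) then 1 else 0)"
    unfolding cf1_def using dvd_add_flip[OF un(1,2)] dvd_add_flip[OF un(2,1)] by (simp add: add.commute)
  have "cF (n # ns) u v = cf1 n (u div N) (v div N) * cF ns (u mod N) (v mod N)"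
    by (simp add: cF_cons ckron_def N_def)
  also have "\<dots> = (if lexlist (n # ns) ! v = mneg (n # ns) (lexlist (n # ns) ! u) then 1 else 0)"
  proof -
    have ih: "cF ns (u mod N) (v mod N) = (if lexlist ns ! (v mod N) = mneg ns (lexlist ns ! (u mod N)) then 1 else 0)"
      using Cons.IH[OF pos' um[unfolded N_def]] by (simp add: N_def)
    show ?thesis unfolding c1 ih lu lv mneg_cons by simp
  qed
  finally show ?case .
qed


lemma swap3: "(\<Sum>y<(N::nat). \<Sum>x<N. \<Sum>\<rho>\<in>F. f \<rho> x y) = (\<Sum>\<rho>\<in>F. \<Sum>y<N. \<Sum>x<N. f \<rho> x y)"
  by (simp only: sum.swap[of _ "{..<N::nat}" F])

lemma key:
  fixes a :: "nat \<Rightarrow> complex" and b :: "'r \<Rightarrow> nat \<Rightarrow> nat \<Rightarrow> complex"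
  shows "(\<Sum>y<N. (\<Sum>x<N. of_cpx (a x) * (\<Sum>\<rho>\<in>F. of_cpx (b \<rho> x y) * P \<rho>)) * of_cpx (c y))
    = of_cpx (\<Sum>\<rho>\<in>F. cpart (P \<rho>) * (\<Sum>y<N. \<Sum>x<N. a x * b \<rho> x y * c y))
      + of_cpx (\<Sum>\<rho>\<in>F. jpart (P \<rho>) * (\<Sum>y<N. \<Sum>x<N. a x * b \<rho> x y * cnj (c y))) * qj"
proof -
  have "(\<Sum>y<N. (\<Sum>x<N. of_cpx (a x) * (\<Sum>\<rho>\<in>F. of_cpx (b \<rho> x y) * P \<rho>)) * of_cpx (c y))
     = (\<Sum>y<N. \<Sum>x<N. \<Sum>\<rho>\<in>F. of_cpx (a x * b \<rho> x y) * P \<rho> * of_cpx (c y))"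
    by (simp add: sum_distrib_left sum_distrib_right of_cpx_mult mult.assoc)
  also have "\<dots> = (\<Sum>y<N. \<Sum>x<N. \<Sum>\<rho>\<in>F. of_cpx (a x * b \<rho> x y * cpart (P \<rho>) * c y)
       + of_cpx (a x * b \<rho> x y * jpart (P \<rho>) * cnj (c y)) * qj)"
    by (simp only: term_split)
  also have "\<dots> = of_cpx (\<Sum>y<N. \<Sum>x<N. \<Sum>\<rho>\<in>F. a x * b \<rho> x y * cpart (P \<rho>) * c y)
       + of_cpx (\<Sum>y<N. \<Sum>x<N. \<Sum>\<rho>\<in>F. a x * b \<rho> x y * jpart (P \<rho>) * cnj (c y)) * qj"
    by (simp only: sum.distrib sum_distrib_right of_cpx_sum)
  also have "(\<Sum>y<N. \<Sum>x<N. \<Sum>\<rho>\<in>F. a x * b \<rho> x y * cpart (P \<rho>) * c y)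
     = (\<Sum>\<rho>\<in>F. cpart (P \<rho>) * (\<Sum>y<N. \<Sum>x<N. a x * b \<rho> x y * c y))"
    by (simp only: swap3 sum_distrib_left) (simp add: mult_ac)
  also have "(\<Sum>y<N. \<Sum>x<N. \<Sum>\<rho>\<in>F. a x * b \<rho> x y * jpart (P \<rho>) * cnj (c y))
     = (\<Sum>\<rho>\<in>F. jpart (P \<rho>) * (\<Sum>y<N. \<Sum>x<N. a x * b \<rho> x y * cnj (c y)))"
    by (simp only: swap3 sum_distrib_left) (simp add: mult_ac)
  finally show ?thesis .
qed

lemma Shat_cE: "Shat ns F p l k a b = (\<Sum>\<rho>\<in>F. of_cpx (of_real (qcomp l (p \<rho> a b)) * cE ns k \<rho>))"
  by (simp add: Shat_def cE_def)

lemma D1_eq: "D1 ns F p k a b = of_cpx (\<Sum>\<rho>\<in>F. cpart (p \<rho> a b) * cE ns k \<rho>)"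
proof -
  have "D1 ns F p k a b = Shat ns F p 0 k a b + Shat ns F p 1 k a b * qi"
    by (simp add: D1_def madd_def mscal_def)
  also have "\<dots> = of_cpx (\<Sum>\<rho>\<in>F. of_real (q0 (p \<rho> a b)) * cE ns k \<rho> + of_real (q1 (p \<rho> a b)) * cE ns k \<rho> * \<i>)"
    by (simp add: Shat_cE qcomp_def sum_distrib_right of_cpx_qi of_cpx_sum sum.distrib of_cpx_add)
  also have "\<dots> = of_cpx (\<Sum>\<rho>\<in>F. cpart (p \<rho> a b) * cE ns k \<rho>)"
    by (simp add: cpart_def Complex_eq algebra_simps)
  finally show ?thesis .
qed

lemma D2_eq: "D2 ns F p k a b = of_cpx (\<Sum>\<rho>\<in>F. jpart (p \<rho> a b) * cE ns k \<rho>) * qj"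
proof -
  have "D2 ns F p k a b = (Shat ns F p 2 k a b + Shat ns F p 3 k a b * qi) * qj"
    by (simp add: D2_def madd_def mscal_def)
  also have "Shat ns F p 2 k a b + Shat ns F p 3 k a b * qi = of_cpx (\<Sum>\<rho>\<in>F. of_real (q2 (p \<rho> a b)) * cE ns k \<rho> + of_real (q3 (p \<rho> a b)) * cE ns k \<rho> * \<i>)"
    by (simp add: Shat_cE qcomp_def sum_distrib_right of_cpx_qi of_cpx_sum sum.distrib of_cpx_add)
  also have "(\<Sum>\<rho>\<in>F. of_real (q2 (p \<rho> a b)) * cE ns k \<rho> + of_real (q3 (p \<rho> a b)) * cE ns k \<rho> * \<i>) = (\<Sum>\<rho>\<in>F. jpart (p \<rho> a b) * cE ns k \<rho>)"
    by (simp add: jpart_def Complex_eq algebra_simps)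
  finally show ?thesis .
qed


definition Xf :: "nat list \<Rightarrow> int list set \<Rightarrow> (int list \<Rightarrow> qmat) \<Rightarrow> nat \<Rightarrow> nat \<Rightarrow> qmat" where
  "Xf ns F p s t = (\<lambda>i j. (if i div s = j div t then D1 ns F p (lexlist ns ! (i div s)) (i mod s) (j mod t) else 0)
     + (if lexlist ns ! (j div t) = mneg ns (lexlist ns ! (i div s)) then D2 ns F p (lexlist ns ! (i div s)) (i mod s) (j mod t) else 0))"

lemma qcnj_0[simp]: "qcnj 0 = 0"
  by (simp add: qcnj_def zero_quat_def)

lemma stepA:
  assumes "0 < s" "\<alpha> < s"
  shows "(\<Sum>a<N* s. kron (qdft ns) s s idm i a * g a)
       = (\<Sum>x<N. of_cpx (cQ ns (i div s) x) * g (x* s + i mod s))"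
proof -
  have "(\<Sum>a<N* s. kron (qdft ns) s s idm i a * g a) = (\<Sum>x<N. \<Sum>z<s. kron (qdft ns) s s idm i (x* s+z) * g (x* s+z))"
    by (rule sum_split_mult)
  also have "\<dots> = (\<Sum>x<N. of_cpx (cQ ns (i div s) x) * g (x* s + i mod s))"
  proof (rule sum.cong[OF refl])
    fix x
    have "(\<Sum>z<s. kron (qdft ns) s s idm i (x* s+z) * g (x* s+z))
        = (\<Sum>z<s. if z = i mod s then of_cpx (cQ ns (i div s) x) * g (x* s + i mod s) else 0)"
      by (rule sum.cong[OF refl]) (auto simp: kron_def qdft_cpx idm_def)
    also have "\<dots> = of_cpx (cQ ns (i div s) x) * g (x* s + i mod s)"
      using assms(1) by simp
    finally show "(\<Sum>z<s. kron (qdft ns) s s idm i (x* s+z) * g (x* s+z)) = of_cpx (cQ ns (i div s) x) * g (x* s + i mod s)" .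
  qed
  finally show ?thesis .
qed

lemma stepB:
  assumes "0 < t"
  shows "(\<Sum>c<N* t. g c * ctr (kron (qdft ns) t t idm) c j)
       = (\<Sum>y<N. g (y* t + j mod t) * of_cpx (cnj (cQ ns (j div t) y)))"
proof -
  have "(\<Sum>c<N* t. g c * ctr (kron (qdft ns) t t idm) c j) = (\<Sum>y<N. \<Sum>z<t. g (y* t+z) * ctr (kron (qdft ns) t t idm) (y* t+z) j)"
    by (rule sum_split_mult)
  also have "\<dots> = (\<Sum>y<N. g (y* t + j mod t) * of_cpx (cnj (cQ ns (j div t) y)))"
  proof (rule sum.cong[OF refl])
    fix y
    have "(\<Sum>z<t. g (y* t+z) * ctr (kron (qdft ns) t t idm) (y* t+z) j)
        = (\<Sum>z<t. if z = j mod t then g (y* t + j mod t) * of_cpx (cnj (cQ ns (j div t) y)) else 0)"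
      by (rule sum.cong[OF refl]) (auto simp: kron_def qdft_cpx idm_def ctr_def qcnj_of_cpx)
    also have "\<dots> = g (y* t + j mod t) * of_cpx (cnj (cQ ns (j div t) y))"
      using assms(1) by simp
    finally show "(\<Sum>z<t. g (y* t+z) * ctr (kron (qdft ns) t t idm) (y* t+z) j) = g (y* t + j mod t) * of_cpx (cnj (cQ ns (j div t) y))" .
  qed
  finally show ?thesis .
qed

lemma stepC:
  assumes "\<alpha> < s" "\<delta> < t"
  shows "circ ns s t F p (x* s+\<alpha>) (y* t+\<delta>) = (\<Sum>\<rho>\<in>F. of_cpx (cS ns \<rho> x y) * p \<rho> \<alpha> \<delta>)"
  using assms by (simp add: circ_def kron_def mshift_cpx)

lemma part1_M:
  assumes pos: "\<forall>l<length ns. 0 < ns ! l" and s0: "0 < s" and t0: "0 < t"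
    and len: "\<forall>\<rho>\<in>F. length \<rho> = length ns"
    and i: "i < prod_list ns * s" and j: "j < prod_list ns * t"
  shows "mmul (prod_list ns * t) (mmul (prod_list ns * s) (kron (qdft ns) s s idm) (circ ns s t F p)) (ctr (kron (qdft ns) t t idm)) i j
     = Xf ns F p s t i j"
proof -
  define N where "N = prod_list ns"
  define u where "u = i div s"
  define v where "v = j div t"
  define \<alpha> where "\<alpha> = i mod s"
  define \<delta> where "\<delta> = j mod t"
  have uN: "u < N" using i by (simp add: u_def N_def less_mult_imp_div_less)
  have vN: "v < N" using j by (simp add: v_def N_def less_mult_imp_div_less)
  have as: "\<alpha> < s" using s0 by (simp add: \<alpha>_def)
  have dt: "\<delta> < t" using t0 by (simp add: \<delta>_def)
  have "mmul (N * t) (mmul (N * s) (kron (qdft ns) s s idm) (circ ns s t F p)) (ctr (kron (qdft ns) t t idm)) i j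
     = (\<Sum>c<N * t. (\<Sum>a<N * s. kron (qdft ns) s s idm i a * circ ns s t F p a c) * ctr (kron (qdft ns) t t idm) c j)"
    by (simp add: mmul_def)
  also have "\<dots> = (\<Sum>c<N * t. (\<Sum>x<N. of_cpx (cQ ns u x) * circ ns s t F p (x * s + \<alpha>) c) * ctr (kron (qdft ns) t t idm) c j)"
    by (simp only: stepA[OF s0 as] u_def \<alpha>_def)
  also have "\<dots> = (\<Sum>y<N. (\<Sum>x<N. of_cpx (cQ ns u x) * circ ns s t F p (x * s + \<alpha>) (y * t + \<delta>)) * of_cpx (cnj (cQ ns v y)))"
    by (simp only: stepB[OF t0] v_def \<delta>_def)
  also have "\<dots> = (\<Sum>y<N. (\<Sum>x<N. of_cpx (cQ ns u x) * (\<Sum>\<rho>\<in>F. of_cpx (cS ns \<rho> x y) * p \<rho> \<alpha> \<delta>)) * of_cpx (cnj (cQ ns v y)))"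
    by (simp only: stepC[OF as dt])
  also have "\<dots> = of_cpx (\<Sum>\<rho>\<in>F. cpart (p \<rho> \<alpha> \<delta>) * (\<Sum>y<N. \<Sum>x<N. cQ ns u x * cS ns \<rho> x y * cnj (cQ ns v y)))
      + of_cpx (\<Sum>\<rho>\<in>F. jpart (p \<rho> \<alpha> \<delta>) * (\<Sum>y<N. \<Sum>x<N. cQ ns u x * cS ns \<rho> x y * cnj (cnj (cQ ns v y)))) * qj"
    by (rule key)
  also have "\<dots> = of_cpx (\<Sum>\<rho>\<in>F. cpart (p \<rho> \<alpha> \<delta>) * (if u = v then cE ns (lexlist ns ! u) \<rho> else 0))
      + of_cpx (\<Sum>\<rho>\<in>F. jpart (p \<rho> \<alpha> \<delta>) * (cE ns (lexlist ns ! u) \<rho> * cF ns u v)) * qj"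
  proof -
    have e1: "(\<Sum>y<N. \<Sum>x<N. cQ ns u x * cS ns \<rho> x y * cnj (cQ ns v y)) = (if u = v then cE ns (lexlist ns ! u) \<rho> else 0)"
      if "\<rho> \<in> F" for \<rho>
    proof -
      have "(\<Sum>y<N. \<Sum>x<N. cQ ns u x * cS ns \<rho> x y * cnj (cQ ns v y)) = cmul N (cmul N (cQ ns) (cS ns \<rho>)) (cctr (cQ ns)) u v"
        by (simp add: cmul_def cctr_def sum_distrib_right)
      also have "\<dots> = (if u = v then cE ns (lexlist ns ! u) \<rho> else 0)"
        unfolding N_def by (rule QSQ[OF pos _ uN[unfolded N_def] vN[unfolded N_def]]) (use len that in auto)
      finally show ?thesis .
    qed
    have e2: "(\<Sum>y<N. \<Sum>x<N. cQ ns u x * cS ns \<rho> x y * cnj (cnj (cQ ns v y))) = cE ns (lexlist ns ! u) \<rho> * cF ns u v"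
      if "\<rho> \<in> F" for \<rho>
    proof -
      have "(\<Sum>y<N. \<Sum>x<N. cQ ns u x * cS ns \<rho> x y * cnj (cnj (cQ ns v y))) = cmul N (cmul N (cQ ns) (cS ns \<rho>)) (ctrans (cQ ns)) u v"
        by (simp add: cmul_def ctrans_def sum_distrib_right)
      also have "\<dots> = cE ns (lexlist ns ! u) \<rho> * cF ns u v"
        unfolding N_def by (rule QSQT[OF pos _ uN[unfolded N_def] vN[unfolded N_def]]) (use len that in auto)
      finally show ?thesis .
    qed
    show ?thesis using e1 e2 by (simp cong: sum.cong)
  qed
  also have "\<dots> = Xf ns F p s t i j"
  proof -
    have cf: "cF ns u v = (if lexlist ns ! v = mneg ns (lexlist ns ! u) then 1 else 0)"
      using cF_lex[OF pos uN[unfolded N_def] vN[unfolded N_def]] .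
    show ?thesis
      unfolding Xf_def D1_eq D2_eq cf u_def[symmetric] v_def[symmetric] \<alpha>_def[symmetric] \<delta>_def[symmetric]
      by (simp add: sum_distrib_left[symmetric] sum.distrib mult_ac)
  qed
  finally show ?thesis unfolding N_def .
qed


lemma mmul_bd_flip:
  assumes pos: "\<forall>l<length ns. 0 < ns ! l" and s0: "0 < s" and t0: "0 < t"
    and i: "i < prod_list ns * s" and j: "j < prod_list ns * t"
  shows "mmul (prod_list ns * t) (blockdiag ns s t B) (kron (flipm ns) t t idm) i j
     = B (lexlist ns ! (i div s)) (i mod s) (j mod t) * of_cpx (cF ns (i div s) (j div t))"
proof -
  define N where "N = prod_list ns"
  have uN: "i div s < N" using i by (simp add: N_def less_mult_imp_div_less)
  have dt: "j mod t < t" using t0 by simp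
  have "mmul (N * t) (blockdiag ns s t B) (kron (flipm ns) t t idm) i j
     = (\<Sum>y<N. \<Sum>z<t. blockdiag ns s t B i (y * t + z) * kron (flipm ns) t t idm (y * t + z) j)"
    by (simp add: mmul_def sum_split_mult)
  also have "\<dots> = (\<Sum>y<N. if y = i div s then B (lexlist ns ! (i div s)) (i mod s) (j mod t) * of_cpx (cF ns (i div s) (j div t)) else 0)"
  proof (rule sum.cong[OF refl])
    fix y
    have "(\<Sum>z<t. blockdiag ns s t B i (y * t + z) * kron (flipm ns) t t idm (y * t + z) j)
        = (\<Sum>z<t. if z = j mod t then (if y = i div s then B (lexlist ns ! (i div s)) (i mod s) (j mod t) * of_cpx (cF ns (i div s) (j div t)) else 0) else 0)"
      by (rule sum.cong[OF refl]) (auto simp: blockdiag_def kron_def flipm_cpx idm_def)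
    also have "\<dots> = (if y = i div s then B (lexlist ns ! (i div s)) (i mod s) (j mod t) * of_cpx (cF ns (i div s) (j div t)) else 0)"
      using dt by simp
    finally show "(\<Sum>z<t. blockdiag ns s t B i (y * t + z) * kron (flipm ns) t t idm (y * t + z) j) = \<dots>" .
  qed
  also have "\<dots> = B (lexlist ns ! (i div s)) (i mod s) (j mod t) * of_cpx (cF ns (i div s) (j div t))"
    using uN by simp
  finally show ?thesis unfolding N_def .
qed

lemma part1_R:
  assumes pos: "\<forall>l<length ns. 0 < ns ! l" and s0: "0 < s" and t0: "0 < t"
    and i: "i < prod_list ns * s" and j: "j < prod_list ns * t"
  shows "madd (madd (blockdiag ns s t (Shat ns F p 0)) (mscal (blockdiag ns s t (Shat ns F p 1)) qi))
                 (madd (mscal (mmul (prod_list ns * t) (blockdiag ns s t (Shat ns F p 2)) (kron (flipm ns) t t idm)) qj)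
                       (mscal (mmul (prod_list ns * t) (blockdiag ns s t (Shat ns F p 3)) (kron (flipm ns) t t idm)) (qi * qj))) i j
     = Xf ns F p s t i j"
proof -
  have uN: "i div s < prod_list ns" using i by (simp add: less_mult_imp_div_less)
  have vN: "j div t < prod_list ns" using j by (simp add: less_mult_imp_div_less)
  have cf: "cF ns (i div s) (j div t) = (if lexlist ns ! (j div t) = mneg ns (lexlist ns ! (i div s)) then 1 else 0)"
    using cF_lex[OF pos uN vN] .
  have e: "(a::quat) * qj + b * (qi * qj) = (a + b * qi) * qj" for a b
    by (simp add: distrib_right mult.assoc)
  show ?thesis
    unfolding madd_def mscal_def mmul_bd_flip[OF pos s0 t0 i j] Xf_def
    by (simp add: cf blockdiag_def D1_def D2_def madd_def mscal_def e)
qed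


definition Yf :: "nat \<Rightarrow> nat \<Rightarrow> ('k \<Rightarrow> qmat) \<Rightarrow> ('k \<Rightarrow> qmat) \<Rightarrow> ('k \<Rightarrow> 'k) \<Rightarrow> 'k list \<Rightarrow> qmat" where
  "Yf s t d1 d2 mn OL = (\<lambda>i j. if i div s < length OL \<and> j div t < length OL then
      (if OL ! (i div s) = OL ! (j div t) then d1 (OL ! (i div s)) (i mod s) (j mod t) else 0)
    + (if OL ! (j div t) = mn (OL ! (i div s)) then d2 (OL ! (i div s)) (i mod s) (j mod t) else 0) else 0)"

lemma Yf_nil: "Yf s t d1 d2 mn [] = (\<lambda>i j. 0)"
  by (simp add: Yf_def fun_eq_iff)

lemma ge_divmod: assumes "0 < s" "s \<le> i" shows "i div s = Suc ((i - s) div s)" "i mod s = (i - s) mod s"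
  using assms by (simp_all add: le_div_geq le_mod_geq)

lemma lt_divmod: "i < (s::nat) \<Longrightarrow> i div s = 0 \<and> i mod s = i"
  by simp

lemma mid_divmod: assumes "s \<le> i" "i < 2 * (s::nat)" shows "i div s = 1" "i mod s = i - s"
proof -
  have s0: "0 < s" using assms by simp
  have "(i - s) div s = 0" "(i - s) mod s = i - s" using assms by simp_all
  then show "i div s = 1" "i mod s = i - s" using ge_divmod[OF s0 assms(1)] by simp_all
qed

lemma Yf_shift:
  assumes "0 < s" "0 < t" "s \<le> i" "t \<le> j"
  shows "Yf s t d1 d2 mn (k # OL) i j = Yf s t d1 d2 mn OL (i - s) (j - t)"
  using ge_divmod[OF assms(1,3)] ge_divmod[OF assms(2,4)] by (simp add: Yf_def)

lemma dsum_fix: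
  assumes s0: "0 < s" and t0: "0 < t"
    and dist: "distinct (Lf @ OL)" and fx: "\<forall>k\<in>set Lf. mn k = k"
    and out: "\<forall>x\<in>set OL. mn x \<notin> set Lf"
    and B: "dsum B = Yf s t d1 d2 mn OL"
  shows "dsum (map (\<lambda>k. (s, t, madd (d1 k) (d2 k))) Lf @ B) = Yf s t d1 d2 mn (Lf @ OL)"
  using dist fx out
proof (induction Lf)
  case Nil then show ?case using B by simp
next
  case (Cons k Lf)
  define OL' where "OL' = Lf @ OL"
  have IH: "dsum (map (\<lambda>k. (s, t, madd (d1 k) (d2 k))) Lf @ B) = Yf s t d1 d2 mn OL'"
    using Cons by (simp add: OL'_def)
  have kk: "mn k = k" using Cons.prems(2) by simp
  have kn: "k \<notin> set OL'" using Cons.prems(1) by (simp add: OL'_def)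
  have mnx: "mn x \<noteq> k" if "x \<in> set OL'" for x
  proof
    assume "mn x = k"
    show False
    proof (cases "x \<in> set Lf")
      case True then have "mn x = x" using Cons.prems(2) by simp
      then show False using \<open>mn x = k\<close> kn that by simp
    next
      case False then have "x \<in> set OL" using that by (simp add: OL'_def)
      then show False using Cons.prems(3) \<open>mn x = k\<close> by auto
    qed
  qed
  show ?case
  proof (intro ext)
    fix i j
    show "dsum (map (\<lambda>k. (s, t, madd (d1 k) (d2 k))) (k # Lf) @ B) i j = Yf s t d1 d2 mn ((k # Lf) @ OL) i j"
    proof (cases "i < s"; cases "j < t")
      assume "i < s" "j < t"
      then show ?thesis using kk by (simp add: Yf_def madd_def)
    next
      assume a: "i < s" "\<not> j < t"
      have "Yf s t d1 d2 mn (k # OL') i j = 0"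
        using a ge_divmod[OF t0, of j] kk kn by (auto simp: Yf_def)
      then show ?thesis using a by (simp add: OL'_def)
    next
      assume a: "\<not> i < s" "j < t"
      have q: "\<forall>q<length OL'. OL' ! q \<noteq> k \<and> k \<noteq> mn (OL' ! q)"
        using kn mnx nth_mem by metis
      have "Yf s t d1 d2 mn (k # OL') i j = 0"
        using a ge_divmod[OF s0, of i] q by (simp add: Yf_def)
      then show ?thesis using a by (simp add: OL'_def)
    next
      assume a: "\<not> i < s" "\<not> j < t"
      then show ?thesis using IH Yf_shift[OF s0 t0, of i j d1 d2 mn k OL'] by (simp add: OL'_def)
    qed
  qed
qed

lemma ge2_divmod: assumes "0 < s" "2 * s \<le> i"
  shows "i div s = Suc (Suc ((i - 2 * s) div s))" "i mod s = (i - 2 * s) mod s"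
proof -
  have a: "s \<le> i - s" using assms by simp
  have "i - s - s = i - 2 * s" by simp
  then show "i div s = Suc (Suc ((i - 2 * s) div s))" "i mod s = (i - 2 * s) mod s"
    using ge_divmod[OF assms(1), of i] ge_divmod[OF assms(1) a] assms by simp_all
qed

lemma three_cases:
  fixes i s :: nat
  obtains "i < s" | "s \<le> i" "i < 2 * s" | "2 * s \<le> i"
  by linarith

lemma dsum_pairs:
  assumes s0: "0 < s" and t0: "0 < t"
    and dist: "distinct (concat (map (\<lambda>k. [k, mn k]) K))"
    and inv: "\<forall>k\<in>set K. mn k \<noteq> k \<and> mn (mn k) = k"
  shows "dsum (map (\<lambda>k. (2 * s, 2 * t, blk2 s t (d1 k) (d2 k) (d2 (mn k)) (d1 (mn k)))) K)
       = Yf s t d1 d2 mn (concat (map (\<lambda>k. [k, mn k]) K))"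
  using dist inv
proof (induction K)
  case Nil then show ?case by (simp add: Yf_nil)
next
  case (Cons k K)
  define OL' where "OL' = concat (map (\<lambda>k. [k, mn k]) K)"
  have IH: "dsum (map (\<lambda>k. (2 * s, 2 * t, blk2 s t (d1 k) (d2 k) (d2 (mn k)) (d1 (mn k)))) K) = Yf s t d1 d2 mn OL'"
    using Cons by (simp add: OL'_def)
  have k1: "mn k \<noteq> k" "mn (mn k) = k" using Cons.prems(2) by auto
  have k2: "k \<notin> set OL'" "mn k \<notin> set OL'" using Cons.prems(1) by (auto simp: OL'_def)
  have invx: "mn (mn x) = x" if "x \<in> set OL'" for x
    using that Cons.prems(2) by (auto simp: OL'_def)
  have q: "\<forall>q<length OL'. OL' ! q \<noteq> k \<and> OL' ! q \<noteq> mn k \<and> mn (OL' ! q) \<noteq> k \<and> mn (OL' ! q) \<noteq> mn k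
     \<and> k \<noteq> OL' ! q \<and> mn k \<noteq> OL' ! q \<and> k \<noteq> mn (OL' ! q) \<and> mn k \<noteq> mn (OL' ! q)"
  proof (intro allI impI)
    fix q assume "q < length OL'"
    then have x: "OL' ! q \<in> set OL'" by simp
    show "OL' ! q \<noteq> k \<and> OL' ! q \<noteq> mn k \<and> mn (OL' ! q) \<noteq> k \<and> mn (OL' ! q) \<noteq> mn k
     \<and> k \<noteq> OL' ! q \<and> mn k \<noteq> OL' ! q \<and> k \<noteq> mn (OL' ! q) \<and> mn k \<noteq> mn (OL' ! q)"
      using k2 invx[OF x] x k1 by metis
  qed
  have e: "concat (map (\<lambda>k. [k, mn k]) (k # K)) = k # mn k # OL'" by (simp add: OL'_def)
  show ?case unfolding e
  proof (intro ext)
    fix i j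
    have L: "dsum (map (\<lambda>k. (2 * s, 2 * t, blk2 s t (d1 k) (d2 k) (d2 (mn k)) (d1 (mn k)))) (k # K)) i j
      = (if i < 2 * s \<and> j < 2 * t then blk2 s t (d1 k) (d2 k) (d2 (mn k)) (d1 (mn k)) i j
         else if 2 * s \<le> i \<and> 2 * t \<le> j then Yf s t d1 d2 mn OL' (i - 2 * s) (j - 2 * t) else 0)"
      using IH by simp
    show "dsum (map (\<lambda>k. (2 * s, 2 * t, blk2 s t (d1 k) (d2 k) (d2 (mn k)) (d1 (mn k)))) (k # K)) i j
       = Yf s t d1 d2 mn (k # mn k # OL') i j"
    proof -
      consider (jl) "j < t" | (jm) "t \<le> j" "j < 2 * t" | (jg) "2 * t \<le> j" by linarith
      note jc = this
      consider (il) "i < s" | (im) "s \<le> i" "i < 2 * s" | (ig) "2 * s \<le> i" by linarith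
      then show ?thesis
      proof cases
        case il note ii = this
        show ?thesis using jc
        proof cases
          case jl then show ?thesis using ii k1 by (simp add: Yf_def blk2_def)
        next
          case jm then show ?thesis using ii k1 mid_divmod[of t j] by (simp add: Yf_def blk2_def)
        next
          case jg then show ?thesis using ii k1 q ge2_divmod[OF t0, of j] by (simp add: Yf_def)
        qed
      next
        case im note ii = this
        show ?thesis using jc
        proof cases
          case jl then show ?thesis using ii k1 mid_divmod[of s i] by (simp add: Yf_def blk2_def)
        next
          case jm then show ?thesis using ii k1 mid_divmod[of s i] mid_divmod[of t j] by (simp add: Yf_def blk2_def)
        next
          case jg then show ?thesis using ii k1 q mid_divmod[of s i] ge2_divmod[OF t0, of j] by (simp add: Yf_def)
        qed
      next
        case ig note ii = this
        show ?thesis using jc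
        proof cases
          case jl then show ?thesis using ii k1 q ge2_divmod[OF s0, of i] by (simp add: Yf_def)
        next
          case jm then show ?thesis using ii k1 q ge2_divmod[OF s0, of i] mid_divmod[of t j] by (simp add: Yf_def)
        next
          case jg
          have "Yf s t d1 d2 mn (k # mn k # OL') i j = Yf s t d1 d2 mn OL' (i - 2 * s) (j - 2 * t)"
            using ge2_divmod[OF s0 ii] ge2_divmod[OF t0 jg] by (simp add: Yf_def)
          then show ?thesis using ii jg IH by simp
        qed
      qed
    qed
  qed
qed


lemma mem_lexlist_cons: "k \<in> set (lexlist (n # ns)) \<longleftrightarrow> (\<exists>a k'. k = a # k' \<and> a < n \<and> k' \<in> set (lexlist ns))"
  by (auto simp: lexlist.simps(2))

lemma lexlist_len: "k \<in> set (lexlist ns) \<Longrightarrow> length k = length ns"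
  by (induction ns arbitrary: k) (auto simp: mem_lexlist_cons)

lemma mneg_nat_lt: "a < n \<Longrightarrow> nat ((- int a) mod int n) < n"
  by (simp add: nat_less_iff)

lemma mneg_mem: "k \<in> set (lexlist ns) \<Longrightarrow> mneg ns k \<in> set (lexlist ns)"
proof (induction ns arbitrary: k)
  case Nil then show ?case by (simp add: mneg_def)
next
  case (Cons n ns)
  then obtain a k' where k: "k = a # k'" "a < n" "k' \<in> set (lexlist ns)" by (auto simp: mem_lexlist_cons)
  then show ?case using Cons.IH[OF k(3)] mneg_nat_lt[OF k(2)] by (auto simp: mem_lexlist_cons mneg_cons)
qed

lemma neg_neg_mod: assumes "a < n" shows "nat ((- int (nat ((- int a) mod int n))) mod int n) = a"
proof -
  have n0: "0 < n" using assms by simp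
  have "int (nat ((- int a) mod int n)) = (- int a) mod int n" using n0 by simp
  then have "(- int (nat ((- int a) mod int n))) mod int n = (- ((- int a) mod int n)) mod int n" by simp
  also have "\<dots> = int a mod int n" by (simp add: mod_minus_eq)
  also have "\<dots> = int a" using assms by simp
  finally show ?thesis by simp
qed

lemma mneg_inv: "k \<in> set (lexlist ns) \<Longrightarrow> mneg ns (mneg ns k) = k"
proof (induction ns arbitrary: k)
  case Nil then show ?case by (simp add: mneg_def)
next
  case (Cons n ns)
  then obtain a k' where k: "k = a # k'" "a < n" "k' \<in> set (lexlist ns)" by (auto simp: mem_lexlist_cons)
  then show ?case using Cons.IH[OF k(3)] neg_neg_mod[OF k(2)] by (simp add: mneg_cons)
qed

lemma isFix_cons: "isFix (n # ns) (a # k) \<longleftrightarrow> (2 * a) mod n = 0 \<and> isFix ns k"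
  unfolding isFix_def by (auto simp: less_Suc_eq_0_disj)

lemma fix1: assumes "a < n" shows "(2 * a) mod n = 0 \<longleftrightarrow> nat ((- int a) mod int n) = a"
proof -
  have "(2 * a) mod n = 0 \<longleftrightarrow> int n dvd (int a + int a)"
    by (metis mult_2 of_nat_add int_dvd_int_iff dvd_eq_mod_eq_0)
  also have "\<dots> \<longleftrightarrow> a = nat ((- int a) mod int n)" by (rule dvd_add_flip[OF assms assms])
  finally show ?thesis by auto
qed

lemma isFix_iff: "k \<in> set (lexlist ns) \<Longrightarrow> isFix ns k \<longleftrightarrow> mneg ns k = k"
proof (induction ns arbitrary: k)
  case Nil then show ?case by (simp add: mneg_def isFix_def)
next
  case (Cons n ns)
  then obtain a k' where k: "k = a # k'" "a < n" "k' \<in> set (lexlist ns)" by (auto simp: mem_lexlist_cons)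
  then show ?case using Cons.IH[OF k(3)] fix1[OF k(2)] by (simp add: mneg_cons isFix_cons)
qed

lemma lex_less_asym: "lex_less a b \<Longrightarrow> \<not> lex_less b a"
  by (induction a b rule: lex_less.induct) auto

lemma lex_less_total: "length a = length b \<Longrightarrow> a \<noteq> b \<Longrightarrow> lex_less a b \<or> lex_less b a"
proof (induction a arbitrary: b)
  case Nil then show ?case by simp
next
  case (Cons x a)
  then obtain y b' where b: "b = y # b'" by (cases b) auto
  then show ?case using Cons by (cases "x = y") auto
qed

lemma distinct_concat_cons:
  "distinct xs \<Longrightarrow> distinct L \<Longrightarrow> distinct (concat (map (\<lambda>k. map (Cons k) L) xs))"
  by (induction xs) (auto simp: distinct_map)

lemma distinct_lexlist: "distinct (lexlist ns)"
  by (induction ns) (simp_all add: lexlist.simps(2) distinct_concat_cons)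

lemma set_pairs: "set (concat (map (\<lambda>k. [k, f k]) xs)) = set xs \<union> f ` set xs"
  by (induction xs) auto

lemma distinct_pairs:
  "distinct xs \<Longrightarrow> \<forall>k\<in>set xs. f k \<noteq> k \<and> f k \<notin> set xs \<Longrightarrow> inj_on f (set xs)
   \<Longrightarrow> distinct (concat (map (\<lambda>k. [k, f k]) xs))"
proof (induction xs)
  case Nil then show ?case by simp
next
  case (Cons x xs)
  have IH: "distinct (concat (map (\<lambda>k. [k, f k]) xs))"
    using Cons by (auto intro: inj_on_subset)
  have "f x \<notin> f ` set xs" using Cons.prems(1,3) by (auto simp: inj_on_def)
  moreover have "x \<notin> f ` set xs" using Cons.prems(2) by force
  ultimately show ?case using IH Cons.prems by (auto simp: set_pairs)
qed

lemma ordlist_props: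
  shows "distinct (ordlist ns)" "set (ordlist ns) = set (lexlist ns)" "length (ordlist ns) = prod_list ns"
proof -
  define L where "L = lexlist ns"
  define Fx where "Fx = filter (isFix ns) L"
  define Kl where "Kl = filter (inK ns) L"
  have o: "ordlist ns = Fx @ concat (map (\<lambda>k. [k, mneg ns k]) Kl)"
    by (simp add: ordlist_def Fx_def Kl_def L_def)
  have dL: "distinct L" by (simp add: L_def distinct_lexlist)
  have Kprops: "\<forall>k\<in>set Kl. mneg ns k \<noteq> k \<and> mneg ns k \<notin> set Kl"
  proof
    fix k assume k: "k \<in> set Kl"
    then have kL: "k \<in> set L" and ik: "inK ns k" by (auto simp: Kl_def)
    have "mneg ns k \<noteq> k" using ik isFix_iff[of k ns] kL by (auto simp: inK_def L_def)
    moreover have "mneg ns k \<notin> set Kl"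
    proof
      assume "mneg ns k \<in> set Kl"
      then have "lex_less (mneg ns k) (mneg ns (mneg ns k))" by (auto simp: Kl_def inK_def)
      then have "lex_less (mneg ns k) k" using mneg_inv kL by (simp add: L_def)
      then show False using ik lex_less_asym by (auto simp: inK_def)
    qed
    ultimately show "mneg ns k \<noteq> k \<and> mneg ns k \<notin> set Kl" by simp
  qed
  have inj: "inj_on (mneg ns) (set Kl)"
    by (rule inj_on_inverseI[where g="mneg ns"]) (auto simp: Kl_def L_def mneg_inv)
  have dK: "distinct (concat (map (\<lambda>k. [k, mneg ns k]) Kl))"
    using distinct_pairs[of Kl "mneg ns"] Kprops inj dL by (simp add: Kl_def)
  have nofix: "\<not> isFix ns x" if "x \<in> set (concat (map (\<lambda>k. [k, mneg ns k]) Kl))" for x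
  proof -
    from that obtain k where k: "k \<in> set Kl" "x = k \<or> x = mneg ns k" by (auto simp: set_pairs)
    then have kL: "k \<in> set L" and ik: "inK ns k" by (auto simp: Kl_def)
    have "\<not> isFix ns k" using ik by (simp add: inK_def)
    moreover have "isFix ns (mneg ns k) \<longleftrightarrow> isFix ns k"
      using isFix_iff[of "mneg ns k" ns] isFix_iff[of k ns] mneg_mem[of k ns] mneg_inv[of k ns] kL
      by (auto simp: L_def)
    ultimately show ?thesis using k by auto
  qed
  show d: "distinct (ordlist ns)"
    unfolding o using dK dL nofix by (auto simp: Fx_def)
  show st: "set (ordlist ns) = set (lexlist ns)"
  proof
    show "set (ordlist ns) \<subseteq> set (lexlist ns)"
      unfolding o using mneg_mem by (auto simp: Fx_def Kl_def L_def set_pairs)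
  next
    show "set (lexlist ns) \<subseteq> set (ordlist ns)"
    proof
      fix k assume kL: "k \<in> set (lexlist ns)"
      show "k \<in> set (ordlist ns)"
      proof (cases "isFix ns k")
        case True then show ?thesis using kL by (simp add: o Fx_def L_def)
      next
        case nf: False
        show ?thesis
        proof (cases "lex_less k (mneg ns k)")
          case True
          then have "k \<in> set Kl" using kL nf by (simp add: Kl_def L_def inK_def)
          then show ?thesis by (auto simp: o set_pairs)
        next
          case False
          have mk: "mneg ns k \<noteq> k" using nf isFix_iff[OF kL] by simp
          have len: "length (mneg ns k) = length k"
            using lexlist_len[OF kL] lexlist_len[OF mneg_mem[OF kL]] by simp
          have "lex_less (mneg ns k) k" using lex_less_total[OF len mk] False by simp
          then have "lex_less (mneg ns k) (mneg ns (mneg ns k))" using mneg_inv[OF kL] by simp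
          moreover have "\<not> isFix ns (mneg ns k)"
            using isFix_iff[OF mneg_mem[OF kL]] mneg_inv[OF kL] mk by auto
          ultimately have "mneg ns k \<in> set Kl"
            using mneg_mem[OF kL] by (simp add: Kl_def L_def inK_def)
          then have "mneg ns (mneg ns k) \<in> set (ordlist ns)" unfolding o set_append set_pairs by blast
          then show ?thesis using mneg_inv[OF kL] by simp
        qed
      qed
    qed
  qed
  show "length (ordlist ns) = prod_list ns"
    using distinct_card[OF d] distinct_card[OF distinct_lexlist[of ns]] st by simp
qed


definition sig :: "nat list \<Rightarrow> nat \<Rightarrow> nat" where
  "sig ns r = (THE x. x < prod_list ns \<and> lexlist ns ! x = ordlist ns ! r)"

lemma sig_props: assumes "r < prod_list ns"
  shows "sig ns r < prod_list ns" "lexlist ns ! sig ns r = ordlist ns ! r"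
    "\<And>x. x < prod_list ns \<Longrightarrow> lexlist ns ! x = ordlist ns ! r \<Longrightarrow> x = sig ns r"
proof -
  have "ordlist ns ! r \<in> set (lexlist ns)"
  proof -
    have "r < length (ordlist ns)" using assms ordlist_props(3)[of ns] by simp
    then have "ordlist ns ! r \<in> set (ordlist ns)" by (rule nth_mem)
    then show ?thesis using ordlist_props(2)[of ns] by simp
  qed
  then have ex: "\<exists>!x. x < length (lexlist ns) \<and> lexlist ns ! x = ordlist ns ! r"
    by (rule distinct_Ex1[OF distinct_lexlist])
  then have ex': "\<exists>!x. x < prod_list ns \<and> lexlist ns ! x = ordlist ns ! r" by simp
  have P: "sig ns r < prod_list ns \<and> lexlist ns ! sig ns r = ordlist ns ! r"
    unfolding sig_def by (rule theI'[OF ex'])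
  then show "sig ns r < prod_list ns" "lexlist ns ! sig ns r = ordlist ns ! r" by simp_all
  show "\<And>x. x < prod_list ns \<Longrightarrow> lexlist ns ! x = ordlist ns ! r \<Longrightarrow> x = sig ns r"
  proof -
    fix x assume a: "x < prod_list ns" "lexlist ns ! x = ordlist ns ! r"
    have "(THE x. x < prod_list ns \<and> lexlist ns ! x = ordlist ns ! r) = x"
      by (rule the1_equality[OF ex']) (use a in simp)
    then show "x = sig ns r" unfolding sig_def by simp
  qed
qed

lemma PL:
  assumes s0: "0 < s" and i: "i < prod_list ns * s"
  shows "(\<Sum>a<prod_list ns * s. kron (Pperm ns) s s idm i a * g a) = g (sig ns (i div s) * s + i mod s)"
proof -
  define N where "N = prod_list ns"
  have uN: "i div s < N" using i by (simp add: N_def less_mult_imp_div_less)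
  note sg = sig_props[OF uN[unfolded N_def]]
  have "(\<Sum>a<N * s. kron (Pperm ns) s s idm i a * g a) = (\<Sum>x<N. \<Sum>z<s. kron (Pperm ns) s s idm i (x * s + z) * g (x * s + z))"
    by (rule sum_split_mult)
  also have "\<dots> = (\<Sum>x<N. if x = sig ns (i div s) then g (sig ns (i div s) * s + i mod s) else 0)"
  proof (rule sum.cong[OF refl])
    fix x assume x: "x \<in> {..<N}"
    have "(\<Sum>z<s. kron (Pperm ns) s s idm i (x * s + z) * g (x * s + z))
        = (\<Sum>z<s. if z = i mod s then (if x = sig ns (i div s) then g (sig ns (i div s) * s + i mod s) else 0) else 0)"
    proof (rule sum.cong[OF refl])
      fix z assume "z \<in> {..<s}"
      then have z: "z < s" by simp
      have xN: "x < prod_list ns" using x by (simp add: N_def)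
      have iff: "lexlist ns ! x = ordlist ns ! (i div s) \<longleftrightarrow> x = sig ns (i div s)"
      proof
        assume "lexlist ns ! x = ordlist ns ! (i div s)"
        then show "x = sig ns (i div s)" by (rule sg(3)[OF xN])
      next
        assume "x = sig ns (i div s)"
        then show "lexlist ns ! x = ordlist ns ! (i div s)" using sg(2) by simp
      qed
      have dm: "(x * s + z) div s = x" "(x * s + z) mod s = z" using z by simp_all
      then show "kron (Pperm ns) s s idm i (x * s + z) * g (x * s + z) = (if z = i mod s then (if x = sig ns (i div s) then g (sig ns (i div s) * s + i mod s) else 0) else 0)"
        unfolding kron_def Pperm_def idm_def dm iff by simp
    qed
    also have "\<dots> = (if x = sig ns (i div s) then g (sig ns (i div s) * s + i mod s) else 0)"
      using s0 by simp
    finally show "(\<Sum>z<s. kron (Pperm ns) s s idm i (x * s + z) * g (x * s + z)) = \<dots>" .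
  qed
  also have "\<dots> = g (sig ns (i div s) * s + i mod s)"
    using sg(1) by (simp add: N_def)
  finally show ?thesis by (simp add: N_def)
qed

lemma PR:
  assumes t0: "0 < t" and j: "j < prod_list ns * t"
  shows "(\<Sum>c<prod_list ns * t. h c * ctr (kron (Pperm ns) t t idm) c j) = h (sig ns (j div t) * t + j mod t)"
proof -
  define N where "N = prod_list ns"
  have vN: "j div t < N" using j by (simp add: N_def less_mult_imp_div_less)
  note sg = sig_props[OF vN[unfolded N_def]]
  have "(\<Sum>c<N * t. h c * ctr (kron (Pperm ns) t t idm) c j) = (\<Sum>x<N. \<Sum>z<t. h (x * t + z) * ctr (kron (Pperm ns) t t idm) (x * t + z) j)"
    by (rule sum_split_mult)
  also have "\<dots> = (\<Sum>x<N. if x = sig ns (j div t) then h (sig ns (j div t) * t + j mod t) else 0)"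
  proof (rule sum.cong[OF refl])
    fix x assume x: "x \<in> {..<N}"
    have "(\<Sum>z<t. h (x * t + z) * ctr (kron (Pperm ns) t t idm) (x * t + z) j)
        = (\<Sum>z<t. if z = j mod t then (if x = sig ns (j div t) then h (sig ns (j div t) * t + j mod t) else 0) else 0)"
    proof (rule sum.cong[OF refl])
      fix z assume "z \<in> {..<t}"
      then have z: "z < t" by simp
      have xN: "x < prod_list ns" using x by (simp add: N_def)
      have iff: "lexlist ns ! x = ordlist ns ! (j div t) \<longleftrightarrow> x = sig ns (j div t)"
      proof
        assume "lexlist ns ! x = ordlist ns ! (j div t)"
        then show "x = sig ns (j div t)" by (rule sg(3)[OF xN])
      next
        assume "x = sig ns (j div t)"
        then show "lexlist ns ! x = ordlist ns ! (j div t)" using sg(2) by simp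
      qed
      have dm: "(x * t + z) div t = x" "(x * t + z) mod t = z" using z by simp_all
      then show "h (x * t + z) * ctr (kron (Pperm ns) t t idm) (x * t + z) j = (if z = j mod t then (if x = sig ns (j div t) then h (sig ns (j div t) * t + j mod t) else 0) else 0)"
        unfolding ctr_def kron_def Pperm_def idm_def dm iff by (simp add: qcnj_real01)
    qed
    also have "\<dots> = (if x = sig ns (j div t) then h (sig ns (j div t) * t + j mod t) else 0)"
      using t0 by simp
    finally show "(\<Sum>z<t. h (x * t + z) * ctr (kron (Pperm ns) t t idm) (x * t + z) j) = \<dots>" .
  qed
  also have "\<dots> = h (sig ns (j div t) * t + j mod t)"
    using sg(1) by (simp add: N_def)
  finally show ?thesis by (simp add: N_def)
qed


lemma idx_lt: assumes "(a::nat) < N" "b < s" shows "a * s + b < N * s"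
proof -
  have "(a + 1) * s \<le> N * s" using assms(1) by (intro mult_le_mono1) simp
  then show ?thesis using assms(2) by (simp add: algebra_simps)
qed

lemma isFix_mneg: "y \<in> set (lexlist ns) \<Longrightarrow> isFix ns (mneg ns y) \<longleftrightarrow> isFix ns y"
  using isFix_iff[of "mneg ns y" ns] isFix_iff[of y ns] mneg_mem[of y ns] mneg_inv[of y ns] by auto

lemma Xf_sig:
  assumes s0: "0 < s" and t0: "0 < t" and i: "i < prod_list ns * s" and j: "j < prod_list ns * t"
  shows "Xf ns F p s t (sig ns (i div s) * s + i mod s) (sig ns (j div t) * t + j mod t)
       = Yf s t (D1 ns F p) (D2 ns F p) (mneg ns) (ordlist ns) i j"
proof -
  have uN: "i div s < prod_list ns" using i by (simp add: less_mult_imp_div_less)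
  have vN: "j div t < prod_list ns" using j by (simp add: less_mult_imp_div_less)
  note su = sig_props[OF uN] and sv = sig_props[OF vN]
  have dm: "(sig ns (i div s) * s + i mod s) div s = sig ns (i div s)" "(sig ns (i div s) * s + i mod s) mod s = i mod s"
    "(sig ns (j div t) * t + j mod t) div t = sig ns (j div t)" "(sig ns (j div t) * t + j mod t) mod t = j mod t"
    using s0 t0 by simp_all
  have eq: "sig ns (i div s) = sig ns (j div t) \<longleftrightarrow> ordlist ns ! (i div s) = ordlist ns ! (j div t)"
  proof
    assume "sig ns (i div s) = sig ns (j div t)"
    then show "ordlist ns ! (i div s) = ordlist ns ! (j div t)" using su(2) sv(2) by metis
  next
    assume a: "ordlist ns ! (i div s) = ordlist ns ! (j div t)"
    show "sig ns (i div s) = sig ns (j div t)"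
      by (rule sv(3)[OF su(1)]) (simp add: su(2) a)
  qed
  have len: "length (ordlist ns) = prod_list ns" by (rule ordlist_props(3))
  show ?thesis
    unfolding Xf_def Yf_def dm eq su(2) sv(2) using uN vN len by simp
qed

lemma dsum_eq:
  assumes s0: "0 < s" and t0: "0 < t"
  shows "dsum (map (\<lambda>k. (s, t, madd (D1 ns F p k) (D2 ns F p k))) (filter (isFix ns) (lexlist ns))
                @ map (\<lambda>k. (2 * s, 2 * t, blk2 s t (D1 ns F p k) (D2 ns F p k)
                                                 (D2 ns F p (mneg ns k)) (D1 ns F p (mneg ns k))))
                      (filter (inK ns) (lexlist ns)))
       = Yf s t (D1 ns F p) (D2 ns F p) (mneg ns) (ordlist ns)"
proof -
  define L where "L = lexlist ns"
  define Fx where "Fx = filter (isFix ns) L"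
  define Kl where "Kl = filter (inK ns) L"
  define OL where "OL = concat (map (\<lambda>k. [k, mneg ns k]) Kl)"
  have o: "ordlist ns = Fx @ OL" by (simp add: ordlist_def Fx_def Kl_def L_def OL_def)
  have dist: "distinct (Fx @ OL)" using ordlist_props(1)[of ns] by (simp add: o)
  have fx: "\<forall>k\<in>set Fx. mneg ns k = k" using isFix_iff by (auto simp: Fx_def L_def)
  have OLnf: "x \<in> set L \<and> \<not> isFix ns x" if "x \<in> set OL" for x
  proof -
    from that obtain k where k: "k \<in> set Kl" "x = k \<or> x = mneg ns k" by (auto simp: OL_def set_pairs)
    then have kL: "k \<in> set L" and ik: "\<not> isFix ns k" by (auto simp: Kl_def inK_def)
    show ?thesis using k kL ik isFix_mneg[of k ns] mneg_mem[of k ns] by (auto simp: L_def)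
  qed
  have out: "\<forall>x\<in>set OL. mneg ns x \<notin> set Fx"
  proof
    fix x assume x: "x \<in> set OL"
    then have "isFix ns (mneg ns x) \<longleftrightarrow> isFix ns x" using OLnf isFix_mneg by (simp add: L_def)
    then show "mneg ns x \<notin> set Fx" using OLnf[OF x] by (simp add: Fx_def)
  qed
  have inv: "\<forall>k\<in>set Kl. mneg ns k \<noteq> k \<and> mneg ns (mneg ns k) = k"
    using isFix_iff mneg_inv by (auto simp: Kl_def L_def inK_def)
  have B: "dsum (map (\<lambda>k. (2 * s, 2 * t, blk2 s t (D1 ns F p k) (D2 ns F p k) (D2 ns F p (mneg ns k)) (D1 ns F p (mneg ns k)))) Kl)
        = Yf s t (D1 ns F p) (D2 ns F p) (mneg ns) OL"
    unfolding OL_def by (rule dsum_pairs[OF s0 t0]) (use dist inv in \<open>simp_all add: OL_def\<close>)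
  show ?thesis
    using dsum_fix[OF s0 t0 dist fx out B] by (simp add: o Fx_def Kl_def L_def)
qed


theorem mainTheorem16:
  fixes ns :: "nat list" and s t :: nat and F :: "int list set" and p :: "int list \<Rightarrow> qmat"
  assumes "\<forall>l<length ns. 0 < ns ! l"
    and "0 < s" and "0 < t"
    and "finite F" and "\<forall>\<rho>\<in>F. length \<rho> = length ns"
  defines "N \<equiv> prod_list ns"
  defines "UL \<equiv> kron (qdft ns) s s idm"
  defines "UR \<equiv> kron (qdft ns) t t idm"
  defines "AIt \<equiv> kron (flipm ns) t t idm"
  defines "Lam \<equiv> (\<lambda>l. blockdiag ns s t (Shat ns F p l))"
  defines "PiL \<equiv> kron (Pperm ns) s s idm"
  defines "PiR \<equiv> kron (Pperm ns) t t idm"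
  defines "M \<equiv> mmul (N * t) (mmul (N * s) UL (circ ns s t F p)) (ctr UR)"
  shows "meq (N * s) (N * t) M
           (madd (madd (Lam 0) (mscal (Lam 1) qi))
                 (madd (mscal (mmul (N * t) (Lam 2) AIt) qj)
                       (mscal (mmul (N * t) (Lam 3) AIt) (qi * qj))))
       \<and> meq (N * s) (N * t)
           (mmul (N * t) (mmul (N * s) PiL M) (ctr PiR))
           (dsum (map (\<lambda>k. (s, t, madd (D1 ns F p k) (D2 ns F p k)))
                      (filter (isFix ns) (lexlist ns))
                @ map (\<lambda>k. (2 * s, 2 * t, blk2 s t (D1 ns F p k) (D2 ns F p k)
                                                 (D2 ns F p (mneg ns k)) (D1 ns F p (mneg ns k))))
                      (filter (inK ns) (lexlist ns))))"
proof -
  have p1: "M i j = Xf ns F p s t i j" if "i < N * s" "j < N * t" for i j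
    unfolding M_def UL_def UR_def N_def
    by (rule part1_M[OF assms(1,2,3,5)]) (use that in \<open>simp_all add: N_def\<close>)
  have r1: "madd (madd (Lam 0) (mscal (Lam 1) qi))
                 (madd (mscal (mmul (N * t) (Lam 2) AIt) qj)
                       (mscal (mmul (N * t) (Lam 3) AIt) (qi * qj))) i j = Xf ns F p s t i j"
    if "i < N * s" "j < N * t" for i j
    unfolding Lam_def AIt_def N_def
    by (rule part1_R[OF assms(1,2,3)]) (use that in \<open>simp_all add: N_def\<close>)
  have part2: "mmul (N * t) (mmul (N * s) PiL M) (ctr PiR) i j = Yf s t (D1 ns F p) (D2 ns F p) (mneg ns) (ordlist ns) i j"
    if i: "i < N * s" and j: "j < N * t" for i j
  proof -
    have uN: "i div s < N" using i by (simp add: less_mult_imp_div_less)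
    have vN: "j div t < N" using j by (simp add: less_mult_imp_div_less)
    have su: "sig ns (i div s) < N" using sig_props(1)[of "i div s" ns] uN by (simp add: N_def)
    have sv: "sig ns (j div t) < N" using sig_props(1)[of "j div t" ns] vN by (simp add: N_def)
    have "mmul (N * t) (mmul (N * s) PiL M) (ctr PiR) i j
        = (\<Sum>c<N * t. (\<Sum>a<N * s. kron (Pperm ns) s s idm i a * M a c) * ctr (kron (Pperm ns) t t idm) c j)"
      by (simp add: mmul_def PiL_def PiR_def)
    also have "\<dots> = (\<Sum>c<N * t. M (sig ns (i div s) * s + i mod s) c * ctr (kron (Pperm ns) t t idm) c j)"
      using PL[OF assms(2), of i ns] i by (simp add: N_def)
    also have "\<dots> = M (sig ns (i div s) * s + i mod s) (sig ns (j div t) * t + j mod t)"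
      using PR[OF assms(3), of j ns] j by (simp add: N_def)
    also have "\<dots> = Xf ns F p s t (sig ns (i div s) * s + i mod s) (sig ns (j div t) * t + j mod t)"
      by (rule p1) (simp_all add: idx_lt su sv assms(2,3))
    also have "\<dots> = Yf s t (D1 ns F p) (D2 ns F p) (mneg ns) (ordlist ns) i j"
      by (rule Xf_sig[OF assms(2,3)]) (use i j in \<open>simp_all add: N_def\<close>)
    finally show ?thesis .
  qed
  show ?thesis
    unfolding meq_def dsum_eq[OF assms(2,3)] using p1 r1 part2 by simp
qed


end
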